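(* Let $\mathrm{BS}$ be the Biggs-Smith graph. (1) Suppose $(u,v),x$ and $(u',v'),x'$ are edge-vertex pairs in $\mathrm{BS}$ (with $uv,u'v'\in E(\mathrm{BS})$) such that $\operatorname{dist}(u,x)=\operatorname{dist}(u',x')$ and $\operatorname{dist}(v,x)=\operatorname{dist}(v',x')$. Then there is an automorphism $\phi$ of $\mathrm{BS}$ with $\phi(u)=u'$, $\phi(v)=v'$, $\phi(x)=x'$. (2) Suppose $(u,v),(x,y)$ and $(u',v'),(x',y')$ are pairs of edges of $\mathrm{BS}$ such that $\operatorname{dist}(a,b)=\operatorname{dist}(a',b')$ for all $(a,b,a',b')\in\{(u,x,u',x'),(u,y,u',y'),(v,x,v',x'),(v,y,v',y')\}$. Then there is an automorphism $\phi$ of $\mathrm{BS}$ with $\phi(u)=u'$, $\phi(v)=v'$, $\phi(x)=x'$, $\phi(y)=y'$.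
   Context: The Biggs-Smith graph $\mathrm{BS}$ is the cubic graph on the $102$ vertices $ia,ib,ic,id,ie,if$ for $i\in\{1,\dots,17\}$ (indices taken modulo 17, with $0$ written as $17$), whose edges are: $ie\,ia$, $ie\,ib$, $ie\,if$, $if\,ic$, $if\,id$ for each $i$; and $ia\,(i+1)a$, $ib\,(i+4)b$, $ic\,(i+2)c$, $id\,(i+8)d$ for each $i$. $\operatorname{dist}$ is graph distance; an automorphism is a bijection of the vertex set preserving adjacency and non-adjacency. *)

theory Defs
  imports Main
begin

text \<open>Biggs-Smith graph. Vertex (i, L) with i in {0..<17} stands for the
vertex written i followed by the letter L in the paper (index 17 of the paper is 0 here).\<close>

datatype bsl = La | Lb | Lc | Ld | Le | Lf

type_synonym bsv = "nat \<times> bsl"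

definition BS_V :: "bsv set" where
  "BS_V = {0..<17} \<times> UNIV"

definition BS_E0 :: "(bsv \<times> bsv) set" where
  "BS_E0 = (\<Union>i\<in>{0..<17::nat}.
     {((i,Le),(i,La)), ((i,Le),(i,Lb)), ((i,Le),(i,Lf)),
      ((i,Lf),(i,Lc)), ((i,Lf),(i,Ld)),
      ((i,La),((i+1) mod 17,La)), ((i,Lb),((i+4) mod 17,Lb)),
      ((i,Lc),((i+2) mod 17,Lc)), ((i,Ld),((i+8) mod 17,Ld))})"

definition BS_adj :: "bsv \<Rightarrow> bsv \<Rightarrow> bool" where
  "BS_adj u v \<longleftrightarrow> (u,v) \<in> BS_E0 \<or> (v,u) \<in> BS_E0"

text \<open>Graph distance: least length of a walk (BS is connected).\<close>
definition BS_dist :: "bsv \<Rightarrow> bsv \<Rightarrow> nat" where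
  "BS_dist u v = (LEAST n. (u,v) \<in> {(a,b). BS_adj a b} ^^ n)"

definition BS_aut :: "(bsv \<Rightarrow> bsv) \<Rightarrow> bool" where
  "BS_aut \<phi> \<longleftrightarrow> bij_betw \<phi> BS_V BS_V \<and>
     (\<forall>a\<in>BS_V. \<forall>b\<in>BS_V. BS_adj (\<phi> a) (\<phi> b) \<longleftrightarrow> BS_adj a b)"

end

theory Submission
  imports Defs
begin


lemma E0_iff: "((i,L),(j,M)) \<in> BS_E0 \<longleftrightarrow> i < 17 \<and>
   ((L = Le \<and> j = i \<and> (M = La \<or> M = Lb \<or> M = Lf)) \<or>
    (L = Lf \<and> j = i \<and> (M = Lc \<or> M = Ld)) \<or>
    (L = La \<and> M = La \<and> j = (i+1) mod 17) \<or>
    (L = Lb \<and> M = Lb \<and> j = (i+4) mod 17) \<or>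
    (L = Lc \<and> M = Lc \<and> j = (i+2) mod 17) \<or>
    (L = Ld \<and> M = Ld \<and> j = (i+8) mod 17))"
  unfolding BS_E0_def 
  apply (simp add: ex_disj_distrib)
  by (cases L; cases M; simp)



lemma modA: "(c::nat) \<le> 17 \<Longrightarrow> j < 17 \<Longrightarrow> i = (j + c) mod 17 \<Longrightarrow> j = (i + (17 - c)) mod 17"
proof -
  assume a: "c \<le> 17" "j < 17" "i = (j + c) mod 17"
  have "(i + (17 - c)) mod 17 = ((j + c) + (17 - c)) mod 17" using a(3) by (simp add: mod_add_left_eq)
  also have "\<dots> = (j + 17) mod 17" using a(1) by simp
  also have "\<dots> = j" using a(2) by simp
  finally show ?thesis by simp
qed

lemma sym_mod: "(c::nat) \<le> 17 \<Longrightarrow> ((i<17 \<and> j = (i+c) mod 17) \<or> (j<17 \<and> i = (j+c) mod 17)) \<longleftrightarrow> (i<17 \<and> (j = (i+c) mod 17 \<or> j = (i+(17-c)) mod 17))"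
proof -
  assume c: "c \<le> 17"
  have "j = (i + (17 - c)) mod 17 \<Longrightarrow> i < 17 \<Longrightarrow> i = (j + c) mod 17"
    using modA[of "17 - c" i j] c by simp
  then show ?thesis using modA[OF c] by auto
qed

fun nbrs :: "bsv \<Rightarrow> bsv list" where
  "nbrs (i,La) = [(i,Le), ((i+1) mod 17, La), ((i+16) mod 17, La)]"
| "nbrs (i,Lb) = [(i,Le), ((i+4) mod 17, Lb), ((i+13) mod 17, Lb)]"
| "nbrs (i,Lc) = [(i,Lf), ((i+2) mod 17, Lc), ((i+15) mod 17, Lc)]"
| "nbrs (i,Ld) = [(i,Lf), ((i+8) mod 17, Ld), ((i+9) mod 17, Ld)]"
| "nbrs (i,Le) = [(i,La), (i,Lb), (i,Lf)]"
| "nbrs (i,Lf) = [(i,Le), (i,Lc), (i,Ld)]"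

lemma adj_iff0: "BS_adj (i,L) (j,M) \<longleftrightarrow> (i,L) \<in> BS_V \<and> (j,M) \<in> set (nbrs (i,L))"
  unfolding BS_adj_def BS_V_def
  apply (cases L; cases M; simp add: E0_iff)
  by (simp_all add: sym_mod[of 1 i j, simplified] sym_mod[of 4 i j, simplified] sym_mod[of 2 i j, simplified] sym_mod[of 8 i j, simplified], auto)

lemma adj_iff: "BS_adj a b \<longleftrightarrow> a \<in> BS_V \<and> b \<in> set (nbrs a)"
  using adj_iff0 by (metis prod.exhaust)



abbreviation "RR \<equiv> {(a,b). BS_adj a b}"

lemma adj_V: "BS_adj a b \<Longrightarrow> a \<in> BS_V \<and> b \<in> BS_V"
  by (metis BS_adj_def adj_iff)

lemma adj_sym: "BS_adj a b \<Longrightarrow> BS_adj b a"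
  unfolding BS_adj_def by blast

lemma aut_adj: "BS_aut \<phi> \<Longrightarrow> BS_adj a b \<Longrightarrow> BS_adj (\<phi> a) (\<phi> b)"
  unfolding BS_aut_def using adj_V by blast

lemma aut_V: "BS_aut \<phi> \<Longrightarrow> a \<in> BS_V \<Longrightarrow> \<phi> a \<in> BS_V"
  unfolding BS_aut_def bij_betw_def by blast

lemma aut_comp: "BS_aut \<phi> \<Longrightarrow> BS_aut \<psi> \<Longrightarrow> BS_aut (\<phi> \<circ> \<psi>)"
  unfolding BS_aut_def
  by (metis bij_betw_apply bij_betw_trans comp_apply)

lemma aut_id: "BS_aut id"
  unfolding BS_aut_def by simp

lemma aut_inv:
  assumes "BS_aut \<phi>"
  shows "BS_aut (inv_into BS_V \<phi>) \<and> (\<forall>x\<in>BS_V. inv_into BS_V \<phi> (\<phi> x) = x)"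
proof -
  have b: "bij_betw \<phi> BS_V BS_V" using assms unfolding BS_aut_def by (rule conjunct1)
  have ad: "\<And>a b. a \<in> BS_V \<Longrightarrow> b \<in> BS_V \<Longrightarrow> BS_adj (\<phi> a) (\<phi> b) \<longleftrightarrow> BS_adj a b"
    using assms unfolding BS_aut_def by simp
  define \<psi> where "\<psi> = inv_into BS_V \<phi>"
  have bi: "bij_betw \<psi> BS_V BS_V" unfolding \<psi>_def by (rule bij_betw_inv_into[OF b])
  have fi: "\<And>a. a \<in> BS_V \<Longrightarrow> \<phi> (\<psi> a) = a"
    unfolding \<psi>_def using b by (rule bij_betw_inv_into_right)
  have li: "\<And>a. a \<in> BS_V \<Longrightarrow> \<psi> (\<phi> a) = a"
    unfolding \<psi>_def using b by (rule bij_betw_inv_into_left)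
  have "BS_adj (\<psi> a) (\<psi> b) \<longleftrightarrow> BS_adj a b" if a: "a \<in> BS_V" and bb: "b \<in> BS_V" for a b
  proof -
    have h: "\<psi> a \<in> BS_V" "\<psi> b \<in> BS_V" using bij_betw_apply[OF bi a] bij_betw_apply[OF bi bb] .
    have "BS_adj (\<phi> (\<psi> a)) (\<phi> (\<psi> b)) \<longleftrightarrow> BS_adj (\<psi> a) (\<psi> b)" by (rule ad[OF h])
    then show ?thesis unfolding fi[OF a] fi[OF bb] by simp
  qed
  then show ?thesis using bi li unfolding BS_aut_def \<psi>_def[symmetric] by simp
qed

lemma aut_relpow: "BS_aut \<phi> \<Longrightarrow> a \<in> BS_V \<Longrightarrow> (a,b) \<in> RR ^^ n \<Longrightarrow> (\<phi> a, \<phi> b) \<in> RR ^^ n"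
proof (induction n arbitrary: b)
  case 0
  then show ?case by simp
next
  case (Suc n)
  from Suc.prems(3) obtain c where c: "(a,c) \<in> RR ^^ n" "BS_adj c b" by auto
  have "(\<phi> a, \<phi> c) \<in> RR ^^ n" using Suc.IH[OF Suc.prems(1,2) c(1)] .
  moreover have "BS_adj (\<phi> c) (\<phi> b)" using aut_adj[OF Suc.prems(1) c(2)] .
  ultimately show ?case by auto
qed

lemma aut_dist:
  assumes "BS_aut \<phi>" "a \<in> BS_V" "b \<in> BS_V"
  shows "BS_dist (\<phi> a) (\<phi> b) = BS_dist a b"
proof -
  obtain \<psi> where p: "BS_aut \<psi>" "\<forall>x\<in>BS_V. \<psi> (\<phi> x) = x" using aut_inv[OF assms(1)] by blast
  have "\<And>n. (\<phi> a, \<phi> b) \<in> RR ^^ n \<longleftrightarrow> (a,b) \<in> RR ^^ n"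
  proof
    fix n assume "(\<phi> a, \<phi> b) \<in> RR ^^ n"
    from aut_relpow[OF p(1) aut_V[OF assms(1,2)] this] show "(a,b) \<in> RR ^^ n"
      using p(2) assms by simp
  next
    fix n assume "(a,b) \<in> RR ^^ n"
    from aut_relpow[OF assms(1,2) this] show "(\<phi> a, \<phi> b) \<in> RR ^^ n" .
  qed
  then show ?thesis unfolding BS_dist_def by simp
qed

lemma dist_pot:
  fixes f :: "bsv \<Rightarrow> nat"
  assumes s: "s \<in> BS_V" "f s = 0"
    and e: "\<forall>a\<in>BS_V. \<forall>b\<in>set (nbrs a). f b \<le> f a + 1"
    and p: "\<forall>x\<in>BS_V. x \<noteq> s \<longrightarrow> (\<exists>y\<in>set (nbrs x). f y + 1 = f x)"
    and x: "x \<in> BS_V"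
  shows "BS_dist s x = f x"
proof -
  have up: "f y \<le> n" if "(s,y) \<in> RR ^^ n" for y n
    using that
  proof (induction n arbitrary: y)
    case 0 then show ?case using s by simp
  next
    case (Suc n)
    from Suc.prems obtain c where c: "(s,c) \<in> RR ^^ n" "BS_adj c y" by auto
    have "f y \<le> f c + 1" using e c(2) adj_iff by blast
    then show ?case using Suc.IH[OF c(1)] by simp
  qed
  have dn: "\<And>y. y \<in> BS_V \<Longrightarrow> f y = m \<Longrightarrow> (s,y) \<in> RR ^^ m" for m
  proof (induction m)
    case 0
    then have "y = s" using p by fastforce
    then show ?case by simp
  next
    case (Suc m)
    then have "y \<noteq> s" using s by auto
    then obtain z where z: "z \<in> set (nbrs y)" "f z + 1 = f y" using p Suc.prems(1) by blast
    have adj: "BS_adj y z" using z(1) Suc.prems(1) adj_iff by blast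
    then have "z \<in> BS_V" using adj_V by blast
    then have "(s,z) \<in> RR ^^ m" using Suc.IH z(2) Suc.prems(2) by simp
    then show ?case using adj_sym[OF adj] by auto
  qed
  show ?thesis unfolding BS_dist_def
    by (rule Least_equality) (use dn[OF x refl] up in auto)
qed

lemma UNIV_bsl: "(UNIV::bsl set) = {La,Lb,Lc,Ld,Le,Lf}"
proof -
  have "x \<in> {La,Lb,Lc,Ld,Le,Lf}" for x by (cases x) auto
  then show ?thesis by blast
qed

lemma aut_check:
  assumes "\<forall>a\<in>BS_V. \<phi> a \<in> BS_V \<and> \<psi> (\<phi> a) = a \<and> (\<forall>b\<in>set (nbrs a). \<phi> b \<in> set (nbrs (\<phi> a)))"
    and dn: "\<forall>a\<in>BS_V. distinct (nbrs a)"
  shows "BS_aut \<phi>"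
proof -
  have inj: "inj_on \<phi> BS_V" using assms(1) by (metis inj_on_inverseI)
  have sub: "\<phi> ` BS_V \<subseteq> BS_V" using assms(1) by auto
  have fin: "finite BS_V" unfolding BS_V_def UNIV_bsl by simp
  have bij: "bij_betw \<phi> BS_V BS_V"
    using endo_inj_surj[OF fin sub inj] inj by (simp add: bij_betw_def)
  have nV: "\<And>a. a \<in> BS_V \<Longrightarrow> set (nbrs a) \<subseteq> BS_V" using adj_iff adj_V by blast
  have img: "set (nbrs (\<phi> a)) = \<phi> ` set (nbrs a)" if a: "a \<in> BS_V" for a
  proof -
    have s1: "\<phi> ` set (nbrs a) \<subseteq> set (nbrs (\<phi> a))" using assms(1) a by auto
    have "card (\<phi> ` set (nbrs a)) = card (set (nbrs a))"
      using card_image inj nV[OF a] inj_on_subset by metis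
    also have "\<dots> = length (nbrs a)" using dn a distinct_card by blast
    also have "\<dots> = 3" by (cases a rule: nbrs.cases) auto
    finally have c1: "card (\<phi> ` set (nbrs a)) = 3" .
    have "card (set (nbrs (\<phi> a))) \<le> 3"
      using card_length[of "nbrs (\<phi> a)"] by (cases "\<phi> a" rule: nbrs.cases) auto
    then show ?thesis using s1 c1
      by (metis card_seteq List.finite_set)
  qed
  have "\<forall>a\<in>BS_V. \<forall>b\<in>BS_V. BS_adj (\<phi> a) (\<phi> b) \<longleftrightarrow> BS_adj a b"
  proof (intro ballI)
    fix a b assume a: "a \<in> BS_V" and b: "b \<in> BS_V"
    have "BS_adj (\<phi> a) (\<phi> b) \<longleftrightarrow> \<phi> b \<in> \<phi> ` set (nbrs a)"
      using adj_iff img[OF a] sub a by auto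
    also have "\<dots> \<longleftrightarrow> b \<in> set (nbrs a)"
      using inj nV[OF a] b by (meson inj_on_image_mem_iff)
    also have "\<dots> \<longleftrightarrow> BS_adj a b" using adj_iff a by simp
    finally show "BS_adj (\<phi> a) (\<phi> b) \<longleftrightarrow> BS_adj a b" .
  qed
  then show ?thesis unfolding BS_aut_def using bij by simp
qed




fun lidx :: "bsl \<Rightarrow> nat" where
  "lidx La = 0" | "lidx Lb = 1" | "lidx Lc = 2" | "lidx Ld = 3" | "lidx Le = 4" | "lidx Lf = 5"

fun look :: "'a list list \<Rightarrow> bsv \<Rightarrow> 'a" where
  "look T (i,L) = T ! lidx L ! i"

definition Vlist :: "bsv list" where
  "Vlist = List.product [0..<17] [La,Lb,Lc,Ld,Le,Lf]"

lemma V_eq: "BS_V = set Vlist"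
  unfolding BS_V_def Vlist_def UNIV_bsl by simp

lemma upt17: "[0..<17] = [0,1,2,3,4,5,6,7,8,9,10,11,12,13,14,15,16::nat]"
  by (simp add: upt_rec)

lemma dn: "\<forall>a\<in>BS_V. distinct (nbrs a)"
  unfolding V_eq Vlist_def upt17 by simp

definition autchk :: "(bsv \<Rightarrow> bsv) \<Rightarrow> (bsv \<Rightarrow> bsv) \<Rightarrow> bool" where
  "autchk \<phi> \<psi> = list_all (\<lambda>a. \<phi> a \<in> BS_V \<and> \<psi> (\<phi> a) = a \<and> list_all (\<lambda>b. \<phi> b \<in> set (nbrs (\<phi> a))) (nbrs a)) Vlist"

lemma autchk_aut: "autchk \<phi> \<psi> \<Longrightarrow> BS_aut \<phi>"
  apply (rule aut_check[OF _ dn, where \<psi>=\<psi>])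
  unfolding autchk_def V_eq by (simp add: list_all_iff)



definition S0 :: "bsv list list" where "S0 = [[(0,La), (1,La), (2,La), (3,La), (4,La), (5,La), (6,La), (7,La), (8,La), (9,La), (10,La), (11,La), (12,La), (13,La), (14,La), (15,La), (16,La)], [(0,Lb), (1,Lb), (2,Lb), (3,Lb), (4,Lb), (5,Lb), (6,Lb), (7,Lb), (8,Lb), (9,Lb), (10,Lb), (11,Lb), (12,Lb), (13,Lb), (14,Lb), (15,Lb), (16,Lb)], [(0,Lc), (1,Lc), (2,Lc), (3,Lc), (4,Lc), (5,Lc), (6,Lc), (7,Lc), (8,Lc), (9,Lc), (10,Lc), (11,Lc), (12,Lc), (13,Lc), (14,Lc), (15,Lc), (16,Lc)], [(0,Ld), (1,Ld), (2,Ld), (3,Ld), (4,Ld), (5,Ld), (6,Ld), (7,Ld), (8,Ld), (9,Ld), (10,Ld), (11,Ld), (12,Ld), (13,Ld), (14,Ld), (15,Ld), (16,Ld)], [(0,Le), (1,Le), (2,Le), (3,Le), (4,Le), (5,Le), (6,Le), (7,Le), (8,Le), (9,Le), (10,Le), (11,Le), (12,Le), (13,Le), (14,Le), (15,Le), (16,Le)], [(0,Lf), (1,Lf), (2,Lf), (3,Lf), (4,Lf), (5,Lf), (6,Lf), (7,Lf), (8,Lf), (9,Lf), (10,Lf), (11,Lf), (12,Lf), (13,Lf), (14,Lf), (15,Lf), (16,Lf)]]"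

definition S0i :: "bsv list list" where "S0i = [[(0,La), (1,La), (2,La), (3,La), (4,La), (5,La), (6,La), (7,La), (8,La), (9,La), (10,La), (11,La), (12,La), (13,La), (14,La), (15,La), (16,La)], [(0,Lb), (1,Lb), (2,Lb), (3,Lb), (4,Lb), (5,Lb), (6,Lb), (7,Lb), (8,Lb), (9,Lb), (10,Lb), (11,Lb), (12,Lb), (13,Lb), (14,Lb), (15,Lb), (16,Lb)], [(0,Lc), (1,Lc), (2,Lc), (3,Lc), (4,Lc), (5,Lc), (6,Lc), (7,Lc), (8,Lc), (9,Lc), (10,Lc), (11,Lc), (12,Lc), (13,Lc), (14,Lc), (15,Lc), (16,Lc)], [(0,Ld), (1,Ld), (2,Ld), (3,Ld), (4,Ld), (5,Ld), (6,Ld), (7,Ld), (8,Ld), (9,Ld), (10,Ld), (11,Ld), (12,Ld), (13,Ld), (14,Ld), (15,Ld), (16,Ld)], [(0,Le), (1,Le), (2,Le), (3,Le), (4,Le), (5,Le), (6,Le), (7,Le), (8,Le), (9,Le), (10,Le), (11,Le), (12,Le), (13,Le), (14,Le), (15,Le), (16,Le)], [(0,Lf), (1,Lf), (2,Lf), (3,Lf), (4,Lf), (5,Lf), (6,Lf), (7,Lf), (8,Lf), (9,Lf), (10,Lf), (11,Lf), (12,Lf), (13,Lf), (14,Lf), (15,Lf), (16,Lf)]]"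

definition S1 :: "bsv list list" where "S1 = [[(0,La), (1,La), (1,Le), (1,Lb), (5,Lb), (5,Le), (5,Lf), (5,Ld), (13,Ld), (4,Ld), (12,Ld), (12,Lf), (12,Le), (12,Lb), (16,Lb), (16,Le), (16,La)], [(0,Lb), (3,La), (1,Lc), (14,Le), (13,Lb), (4,La), (3,Lc), (14,Lf), (13,Le), (4,Le), (3,Lf), (14,Lc), (13,La), (4,Lb), (3,Le), (16,Lc), (14,La)], [(0,Ld), (2,Lb), (9,Ld), (6,Lb), (9,Lf), (6,Le), (9,Lc), (6,Lf), (11,Lc), (6,Lc), (11,Lf), (8,Lc), (11,Le), (8,Lf), (11,Lb), (8,Ld), (15,Lb)], [(0,Lc), (2,Lf), (10,Ld), (10,Le), (9,La), (7,La), (7,Lf), (15,Ld), (15,Lc), (2,Lc), (2,Ld), (10,Lf), (10,La), (8,La), (7,Le), (7,Ld), (15,Lf)], [(0,Le), (2,La), (1,Lf), (14,Lb), (9,Lb), (5,La), (5,Lc), (14,Ld), (13,Lf), (4,Lf), (3,Ld), (12,Lc), (12,La), (8,Lb), (3,Lb), (16,Lf), (15,La)], [(0,Lf), (2,Le), (1,Ld), (10,Lb), (9,Le), (6,La), (7,Lc), (6,Ld), (13,Lc), (4,Lc), (11,Ld), (10,Lc), (11,La), (8,Le), (7,Lb), (16,Ld), (15,Le)]]"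

definition S1i :: "bsv list list" where "S1i = [[(0,La), (1,La), (1,Le), (1,Lb), (5,Lb), (5,Le), (5,Lf), (5,Ld), (13,Ld), (4,Ld), (12,Ld), (12,Lf), (12,Le), (12,Lb), (16,Lb), (16,Le), (16,La)], [(0,Lb), (3,La), (1,Lc), (14,Le), (13,Lb), (4,La), (3,Lc), (14,Lf), (13,Le), (4,Le), (3,Lf), (14,Lc), (13,La), (4,Lb), (3,Le), (16,Lc), (14,La)], [(0,Ld), (2,Lb), (9,Ld), (6,Lb), (9,Lf), (6,Le), (9,Lc), (6,Lf), (11,Lc), (6,Lc), (11,Lf), (8,Lc), (11,Le), (8,Lf), (11,Lb), (8,Ld), (15,Lb)], [(0,Lc), (2,Lf), (10,Ld), (10,Le), (9,La), (7,La), (7,Lf), (15,Ld), (15,Lc), (2,Lc), (2,Ld), (10,Lf), (10,La), (8,La), (7,Le), (7,Ld), (15,Lf)], [(0,Le), (2,La), (1,Lf), (14,Lb), (9,Lb), (5,La), (5,Lc), (14,Ld), (13,Lf), (4,Lf), (3,Ld), (12,Lc), (12,La), (8,Lb), (3,Lb), (16,Lf), (15,La)], [(0,Lf), (2,Le), (1,Ld), (10,Lb), (9,Le), (6,La), (7,Lc), (6,Ld), (13,Lc), (4,Lc), (11,Ld), (10,Lc), (11,La), (8,Le), (7,Lb), (16,Ld), (15,Le)]]"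

definition S2 :: "bsv list list" where "S2 = [[(0,La), (16,La), (16,Le), (16,Lb), (12,Lb), (12,Le), (12,Lf), (12,Ld), (4,Ld), (13,Ld), (5,Ld), (5,Lf), (5,Le), (5,Lb), (1,Lb), (1,Le), (1,La)], [(0,Lb), (14,La), (16,Lc), (3,Le), (4,Lb), (13,La), (14,Lc), (3,Lf), (4,Le), (13,Le), (14,Lf), (3,Lc), (4,La), (13,Lb), (14,Le), (1,Lc), (3,La)], [(0,Ld), (15,Lb), (8,Ld), (11,Lb), (8,Lf), (11,Le), (8,Lc), (11,Lf), (6,Lc), (11,Lc), (6,Lf), (9,Lc), (6,Le), (9,Lf), (6,Lb), (9,Ld), (2,Lb)], [(0,Lc), (15,Lf), (7,Ld), (7,Le), (8,La), (10,La), (10,Lf), (2,Ld), (2,Lc), (15,Lc), (15,Ld), (7,Lf), (7,La), (9,La), (10,Le), (10,Ld), (2,Lf)], [(0,Le), (15,La), (16,Lf), (3,Lb), (8,Lb), (12,La), (12,Lc), (3,Ld), (4,Lf), (13,Lf), (14,Ld), (5,Lc), (5,La), (9,Lb), (14,Lb), (1,Lf), (2,La)], [(0,Lf), (15,Le), (16,Ld), (7,Lb), (8,Le), (11,La), (10,Lc), (11,Ld), (4,Lc), (13,Lc), (6,Ld), (7,Lc), (6,La), (9,Le), (10,Lb), (1,Ld), (2,Le)]]"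

definition S2i :: "bsv list list" where "S2i = [[(0,La), (16,La), (16,Le), (16,Lb), (12,Lb), (12,Le), (12,Lf), (12,Ld), (4,Ld), (13,Ld), (5,Ld), (5,Lf), (5,Le), (5,Lb), (1,Lb), (1,Le), (1,La)], [(0,Lb), (14,La), (16,Lc), (3,Le), (4,Lb), (13,La), (14,Lc), (3,Lf), (4,Le), (13,Le), (14,Lf), (3,Lc), (4,La), (13,Lb), (14,Le), (1,Lc), (3,La)], [(0,Ld), (15,Lb), (8,Ld), (11,Lb), (8,Lf), (11,Le), (8,Lc), (11,Lf), (6,Lc), (11,Lc), (6,Lf), (9,Lc), (6,Le), (9,Lf), (6,Lb), (9,Ld), (2,Lb)], [(0,Lc), (15,Lf), (7,Ld), (7,Le), (8,La), (10,La), (10,Lf), (2,Ld), (2,Lc), (15,Lc), (15,Ld), (7,Lf), (7,La), (9,La), (10,Le), (10,Ld), (2,Lf)], [(0,Le), (15,La), (16,Lf), (3,Lb), (8,Lb), (12,La), (12,Lc), (3,Ld), (4,Lf), (13,Lf), (14,Ld), (5,Lc), (5,La), (9,Lb), (14,Lb), (1,Lf), (2,La)], [(0,Lf), (15,Le), (16,Ld), (7,Lb), (8,Le), (11,La), (10,Lc), (11,Ld), (4,Lc), (13,Lc), (6,Ld), (7,Lc), (6,La), (9,Le), (10,Lb), (1,Ld), (2,Le)]]"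

definition S3 :: "bsv list list" where "S3 = [[(0,La), (16,La), (15,La), (14,La), (13,La), (12,La), (11,La), (10,La), (9,La), (8,La), (7,La), (6,La), (5,La), (4,La), (3,La), (2,La), (1,La)], [(0,Lb), (16,Lb), (15,Lb), (14,Lb), (13,Lb), (12,Lb), (11,Lb), (10,Lb), (9,Lb), (8,Lb), (7,Lb), (6,Lb), (5,Lb), (4,Lb), (3,Lb), (2,Lb), (1,Lb)], [(0,Lc), (16,Lc), (15,Lc), (14,Lc), (13,Lc), (12,Lc), (11,Lc), (10,Lc), (9,Lc), (8,Lc), (7,Lc), (6,Lc), (5,Lc), (4,Lc), (3,Lc), (2,Lc), (1,Lc)], [(0,Ld), (16,Ld), (15,Ld), (14,Ld), (13,Ld), (12,Ld), (11,Ld), (10,Ld), (9,Ld), (8,Ld), (7,Ld), (6,Ld), (5,Ld), (4,Ld), (3,Ld), (2,Ld), (1,Ld)], [(0,Le), (16,Le), (15,Le), (14,Le), (13,Le), (12,Le), (11,Le), (10,Le), (9,Le), (8,Le), (7,Le), (6,Le), (5,Le), (4,Le), (3,Le), (2,Le), (1,Le)], [(0,Lf), (16,Lf), (15,Lf), (14,Lf), (13,Lf), (12,Lf), (11,Lf), (10,Lf), (9,Lf), (8,Lf), (7,Lf), (6,Lf), (5,Lf), (4,Lf), (3,Lf), (2,Lf), (1,Lf)]]"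

definition S3i :: "bsv list list" where "S3i = [[(0,La), (16,La), (15,La), (14,La), (13,La), (12,La), (11,La), (10,La), (9,La), (8,La), (7,La), (6,La), (5,La), (4,La), (3,La), (2,La), (1,La)], [(0,Lb), (16,Lb), (15,Lb), (14,Lb), (13,Lb), (12,Lb), (11,Lb), (10,Lb), (9,Lb), (8,Lb), (7,Lb), (6,Lb), (5,Lb), (4,Lb), (3,Lb), (2,Lb), (1,Lb)], [(0,Lc), (16,Lc), (15,Lc), (14,Lc), (13,Lc), (12,Lc), (11,Lc), (10,Lc), (9,Lc), (8,Lc), (7,Lc), (6,Lc), (5,Lc), (4,Lc), (3,Lc), (2,Lc), (1,Lc)], [(0,Ld), (16,Ld), (15,Ld), (14,Ld), (13,Ld), (12,Ld), (11,Ld), (10,Ld), (9,Ld), (8,Ld), (7,Ld), (6,Ld), (5,Ld), (4,Ld), (3,Ld), (2,Ld), (1,Ld)], [(0,Le), (16,Le), (15,Le), (14,Le), (13,Le), (12,Le), (11,Le), (10,Le), (9,Le), (8,Le), (7,Le), (6,Le), (5,Le), (4,Le), (3,Le), (2,Le), (1,Le)], [(0,Lf), (16,Lf), (15,Lf), (14,Lf), (13,Lf), (12,Lf), (11,Lf), (10,Lf), (9,Lf), (8,Lf), (7,Lf), (6,Lf), (5,Lf), (4,Lf), (3,Lf), (2,Lf), (1,Lf)]]"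

definition S4 :: "bsv list list" where "S4 = [[(0,La), (1,La), (2,La), (2,Le), (2,Lf), (2,Ld), (11,Ld), (11,Lf), (11,Lc), (9,Lc), (7,Lc), (7,Lf), (7,Ld), (16,Ld), (16,Lf), (16,Le), (16,La)], [(0,Lf), (1,Lf), (3,Le), (15,Lb), (0,Lc), (1,Ld), (3,Lf), (11,Lb), (15,Lc), (9,Ld), (3,Lc), (7,Lb), (15,Lf), (0,Ld), (1,Lc), (3,Lb), (15,Le)], [(4,Lb), (14,Lb), (4,Le), (10,Lb), (4,Lf), (10,Le), (4,Ld), (10,La), (13,Ld), (9,La), (5,Ld), (8,La), (14,Ld), (8,Le), (14,Lf), (8,Lb), (14,Le)], [(13,Lb), (5,Lb), (5,La), (6,Le), (6,Lc), (10,Lc), (12,Lf), (12,La), (13,Le), (9,Lb), (5,Le), (6,La), (6,Lf), (8,Lc), (12,Lc), (12,Le), (13,La)], [(0,Le), (1,Le), (3,La), (2,Lb), (2,Lc), (10,Ld), (3,Ld), (11,Le), (13,Lc), (9,Lf), (5,Lc), (7,Le), (15,Ld), (8,Ld), (16,Lc), (16,Lb), (15,La)], [(0,Lb), (1,Lb), (4,La), (6,Lb), (4,Lc), (10,Lf), (12,Ld), (11,La), (13,Lf), (9,Le), (5,Lf), (7,La), (6,Ld), (8,Lf), (14,Lc), (12,Lb), (14,La)]]"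

definition S4i :: "bsv list list" where "S4i = [[(0,La), (1,La), (2,La), (2,Le), (2,Lf), (2,Ld), (11,Ld), (11,Lf), (11,Lc), (9,Lc), (7,Lc), (7,Lf), (7,Ld), (16,Ld), (16,Lf), (16,Le), (16,La)], [(0,Lf), (1,Lf), (3,Le), (15,Lb), (0,Lc), (1,Ld), (3,Lf), (11,Lb), (15,Lc), (9,Ld), (3,Lc), (7,Lb), (15,Lf), (0,Ld), (1,Lc), (3,Lb), (15,Le)], [(4,Lb), (14,Lb), (4,Le), (10,Lb), (4,Lf), (10,Le), (4,Ld), (10,La), (13,Ld), (9,La), (5,Ld), (8,La), (14,Ld), (8,Le), (14,Lf), (8,Lb), (14,Le)], [(13,Lb), (5,Lb), (5,La), (6,Le), (6,Lc), (10,Lc), (12,Lf), (12,La), (13,Le), (9,Lb), (5,Le), (6,La), (6,Lf), (8,Lc), (12,Lc), (12,Le), (13,La)], [(0,Le), (1,Le), (3,La), (2,Lb), (2,Lc), (10,Ld), (3,Ld), (11,Le), (13,Lc), (9,Lf), (5,Lc), (7,Le), (15,Ld), (8,Ld), (16,Lc), (16,Lb), (15,La)], [(0,Lb), (1,Lb), (4,La), (6,Lb), (4,Lc), (10,Lf), (12,Ld), (11,La), (13,Lf), (9,Le), (5,Lf), (7,La), (6,Ld), (8,Lf), (14,Lc), (12,Lb), (14,La)]]"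

definition S5 :: "bsv list list" where "S5 = [[(0,La), (1,La), (1,Le), (1,Lf), (1,Ld), (10,Ld), (10,Lf), (10,Lc), (8,Lc), (6,Lc), (6,Lf), (6,Ld), (15,Ld), (15,Lf), (15,Le), (15,La), (16,La)], [(0,Lf), (2,Le), (14,Lb), (16,Lc), (0,Ld), (2,Lf), (10,Lb), (14,Lc), (8,Ld), (2,Lc), (6,Lb), (14,Lf), (16,Ld), (0,Lc), (2,Lb), (14,Le), (16,Lf)], [(13,Lb), (3,Le), (9,Lb), (3,Lf), (9,Le), (3,Ld), (9,La), (12,Ld), (8,La), (4,Ld), (7,La), (13,Ld), (7,Le), (13,Lf), (7,Lb), (13,Le), (3,Lb)], [(4,Lb), (4,La), (5,Le), (5,Lc), (9,Lc), (11,Lf), (11,La), (12,Le), (8,Lb), (4,Le), (5,La), (5,Lf), (7,Lc), (11,Lc), (11,Le), (12,La), (12,Lb)], [(0,Le), (2,La), (1,Lb), (1,Lc), (9,Ld), (2,Ld), (10,Le), (12,Lc), (8,Lf), (4,Lc), (6,Le), (14,Ld), (7,Ld), (15,Lc), (15,Lb), (14,La), (16,Le)], [(0,Lb), (3,La), (5,Lb), (3,Lc), (9,Lf), (11,Ld), (10,La), (12,Lf), (8,Le), (4,Lf), (6,La), (5,Ld), (7,Lf), (13,Lc), (11,Lb), (13,La), (16,Lb)]]"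

definition S5i :: "bsv list list" where "S5i = [[(0,La), (1,La), (1,Le), (1,Lf), (1,Ld), (10,Ld), (10,Lf), (10,Lc), (8,Lc), (6,Lc), (6,Lf), (6,Ld), (15,Ld), (15,Lf), (15,Le), (15,La), (16,La)], [(0,Lf), (2,Le), (14,Lb), (16,Lc), (0,Ld), (2,Lf), (10,Lb), (14,Lc), (8,Ld), (2,Lc), (6,Lb), (14,Lf), (16,Ld), (0,Lc), (2,Lb), (14,Le), (16,Lf)], [(13,Lb), (3,Le), (9,Lb), (3,Lf), (9,Le), (3,Ld), (9,La), (12,Ld), (8,La), (4,Ld), (7,La), (13,Ld), (7,Le), (13,Lf), (7,Lb), (13,Le), (3,Lb)], [(4,Lb), (4,La), (5,Le), (5,Lc), (9,Lc), (11,Lf), (11,La), (12,Le), (8,Lb), (4,Le), (5,La), (5,Lf), (7,Lc), (11,Lc), (11,Le), (12,La), (12,Lb)], [(0,Le), (2,La), (1,Lb), (1,Lc), (9,Ld), (2,Ld), (10,Le), (12,Lc), (8,Lf), (4,Lc), (6,Le), (14,Ld), (7,Ld), (15,Lc), (15,Lb), (14,La), (16,Le)], [(0,Lb), (3,La), (5,Lb), (3,Lc), (9,Lf), (11,Ld), (10,La), (12,Lf), (8,Le), (4,Lf), (6,La), (5,Ld), (7,Lf), (13,Lc), (11,Lb), (13,La), (16,Lb)]]"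

definition S6 :: "bsv list list" where "S6 = [[(0,La), (16,La), (15,La), (15,Le), (15,Lf), (15,Ld), (6,Ld), (6,Lf), (6,Lc), (8,Lc), (10,Lc), (10,Lf), (10,Ld), (1,Ld), (1,Lf), (1,Le), (1,La)], [(0,Lf), (16,Lf), (14,Le), (2,Lb), (0,Lc), (16,Ld), (14,Lf), (6,Lb), (2,Lc), (8,Ld), (14,Lc), (10,Lb), (2,Lf), (0,Ld), (16,Lc), (14,Lb), (2,Le)], [(13,Lb), (3,Lb), (13,Le), (7,Lb), (13,Lf), (7,Le), (13,Ld), (7,La), (4,Ld), (8,La), (12,Ld), (9,La), (3,Ld), (9,Le), (3,Lf), (9,Lb), (3,Le)], [(4,Lb), (12,Lb), (12,La), (11,Le), (11,Lc), (7,Lc), (5,Lf), (5,La), (4,Le), (8,Lb), (12,Le), (11,La), (11,Lf), (9,Lc), (5,Lc), (5,Le), (4,La)], [(0,Le), (16,Le), (14,La), (15,Lb), (15,Lc), (7,Ld), (14,Ld), (6,Le), (4,Lc), (8,Lf), (12,Lc), (10,Le), (2,Ld), (9,Ld), (1,Lc), (1,Lb), (2,La)], [(0,Lb), (16,Lb), (13,La), (11,Lb), (13,Lc), (7,Lf), (5,Ld), (6,La), (4,Lf), (8,Le), (12,Lf), (10,La), (11,Ld), (9,Lf), (3,Lc), (5,Lb), (3,La)]]"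

definition S6i :: "bsv list list" where "S6i = [[(0,La), (16,La), (16,Le), (16,Lf), (16,Ld), (7,Ld), (7,Lf), (7,Lc), (9,Lc), (11,Lc), (11,Lf), (11,Ld), (2,Ld), (2,Lf), (2,Le), (2,La), (1,La)], [(0,Lf), (15,Le), (3,Lb), (1,Lc), (0,Ld), (15,Lf), (7,Lb), (3,Lc), (9,Ld), (15,Lc), (11,Lb), (3,Lf), (1,Ld), (0,Lc), (15,Lb), (3,Le), (1,Lf)], [(4,Lb), (14,Le), (8,Lb), (14,Lf), (8,Le), (14,Ld), (8,La), (5,Ld), (9,La), (13,Ld), (10,La), (4,Ld), (10,Le), (4,Lf), (10,Lb), (4,Le), (14,Lb)], [(13,Lb), (13,La), (12,Le), (12,Lc), (8,Lc), (6,Lf), (6,La), (5,Le), (9,Lb), (13,Le), (12,La), (12,Lf), (10,Lc), (6,Lc), (6,Le), (5,La), (5,Lb)], [(0,Le), (15,La), (16,Lb), (16,Lc), (8,Ld), (15,Ld), (7,Le), (5,Lc), (9,Lf), (13,Lc), (11,Le), (3,Ld), (10,Ld), (2,Lc), (2,Lb), (3,La), (1,Le)], [(0,Lb), (14,La), (12,Lb), (14,Lc), (8,Lf), (6,Ld), (7,La), (5,Lf), (9,Le), (13,Lf), (11,La), (12,Ld), (10,Lf), (4,Lc), (6,Lb), (4,La), (1,Lb)]]"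

definition S7 :: "bsv list list" where "S7 = [[(0,La), (16,La), (16,Le), (16,Lf), (16,Ld), (7,Ld), (7,Lf), (7,Lc), (9,Lc), (11,Lc), (11,Lf), (11,Ld), (2,Ld), (2,Lf), (2,Le), (2,La), (1,La)], [(0,Lf), (15,Le), (3,Lb), (1,Lc), (0,Ld), (15,Lf), (7,Lb), (3,Lc), (9,Ld), (15,Lc), (11,Lb), (3,Lf), (1,Ld), (0,Lc), (15,Lb), (3,Le), (1,Lf)], [(4,Lb), (14,Le), (8,Lb), (14,Lf), (8,Le), (14,Ld), (8,La), (5,Ld), (9,La), (13,Ld), (10,La), (4,Ld), (10,Le), (4,Lf), (10,Lb), (4,Le), (14,Lb)], [(13,Lb), (13,La), (12,Le), (12,Lc), (8,Lc), (6,Lf), (6,La), (5,Le), (9,Lb), (13,Le), (12,La), (12,Lf), (10,Lc), (6,Lc), (6,Le), (5,La), (5,Lb)], [(0,Le), (15,La), (16,Lb), (16,Lc), (8,Ld), (15,Ld), (7,Le), (5,Lc), (9,Lf), (13,Lc), (11,Le), (3,Ld), (10,Ld), (2,Lc), (2,Lb), (3,La), (1,Le)], [(0,Lb), (14,La), (12,Lb), (14,Lc), (8,Lf), (6,Ld), (7,La), (5,Lf), (9,Le), (13,Lf), (11,La), (12,Ld), (10,Lf), (4,Lc), (6,Lb), (4,La), (1,Lb)]]"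

definition S7i :: "bsv list list" where "S7i = [[(0,La), (16,La), (15,La), (15,Le), (15,Lf), (15,Ld), (6,Ld), (6,Lf), (6,Lc), (8,Lc), (10,Lc), (10,Lf), (10,Ld), (1,Ld), (1,Lf), (1,Le), (1,La)], [(0,Lf), (16,Lf), (14,Le), (2,Lb), (0,Lc), (16,Ld), (14,Lf), (6,Lb), (2,Lc), (8,Ld), (14,Lc), (10,Lb), (2,Lf), (0,Ld), (16,Lc), (14,Lb), (2,Le)], [(13,Lb), (3,Lb), (13,Le), (7,Lb), (13,Lf), (7,Le), (13,Ld), (7,La), (4,Ld), (8,La), (12,Ld), (9,La), (3,Ld), (9,Le), (3,Lf), (9,Lb), (3,Le)], [(4,Lb), (12,Lb), (12,La), (11,Le), (11,Lc), (7,Lc), (5,Lf), (5,La), (4,Le), (8,Lb), (12,Le), (11,La), (11,Lf), (9,Lc), (5,Lc), (5,Le), (4,La)], [(0,Le), (16,Le), (14,La), (15,Lb), (15,Lc), (7,Ld), (14,Ld), (6,Le), (4,Lc), (8,Lf), (12,Lc), (10,Le), (2,Ld), (9,Ld), (1,Lc), (1,Lb), (2,La)], [(0,Lb), (16,Lb), (13,La), (11,Lb), (13,Lc), (7,Lf), (5,Ld), (6,La), (4,Lf), (8,Le), (12,Lf), (10,La), (11,Ld), (9,Lf), (3,Lc), (5,Lb), (3,La)]]"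

definition T0 :: "bsv list list" where "T0 = [[(0,Le), (0,Lb), (13,Lb), (9,Lb), (5,Lb), (5,Le), (5,Lf), (5,Lc), (3,Lc), (3,Lf), (3,Ld), (11,Ld), (2,Ld), (2,Lf), (2,Lc), (0,Lc), (0,Lf)], [(1,La), (4,Le), (13,Lf), (9,Lf), (1,Le), (4,La), (13,Ld), (9,Lc), (1,Lf), (3,La), (4,Ld), (11,Lc), (1,Ld), (2,La), (4,Lf), (13,Lc), (9,Ld)], [(15,La), (8,Le), (14,La), (8,La), (14,Le), (7,La), (14,Lf), (7,Le), (14,Lc), (7,Lb), (12,Lc), (11,Lb), (10,Lc), (15,Lb), (8,Lc), (15,Le), (8,Lf)], [(16,Le), (12,Lb), (12,La), (10,La), (10,Lb), (6,Le), (6,Ld), (7,Ld), (16,Lf), (16,Lb), (12,Le), (11,La), (10,Le), (6,Lb), (6,Lf), (15,Ld), (16,Ld)], [(0,La), (4,Lb), (13,Le), (9,Le), (1,Lb), (5,La), (5,Ld), (7,Lc), (1,Lc), (3,Le), (12,Ld), (11,Lf), (10,Ld), (2,Le), (4,Lc), (15,Lc), (0,Ld)], [(16,La), (8,Lb), (13,La), (9,La), (14,Lb), (6,La), (14,Ld), (7,Lf), (16,Lc), (3,Lb), (12,Lf), (11,Le), (10,Lf), (2,Lb), (6,Lc), (15,Lf), (8,Ld)]]"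

definition T0i :: "bsv list list" where "T0i = [[(0,Le), (0,Lb), (13,Lb), (9,Lb), (5,Lb), (5,Le), (5,Lf), (5,Lc), (3,Lc), (3,Lf), (3,Ld), (11,Ld), (2,Ld), (2,Lf), (2,Lc), (0,Lc), (0,Lf)], [(1,La), (4,Le), (13,Lf), (9,Lf), (1,Le), (4,La), (13,Ld), (9,Lc), (1,Lf), (3,La), (4,Ld), (11,Lc), (1,Ld), (2,La), (4,Lf), (13,Lc), (9,Ld)], [(15,La), (8,Le), (14,La), (8,La), (14,Le), (7,La), (14,Lf), (7,Le), (14,Lc), (7,Lb), (12,Lc), (11,Lb), (10,Lc), (15,Lb), (8,Lc), (15,Le), (8,Lf)], [(16,Le), (12,Lb), (12,La), (10,La), (10,Lb), (6,Le), (6,Ld), (7,Ld), (16,Lf), (16,Lb), (12,Le), (11,La), (10,Le), (6,Lb), (6,Lf), (15,Ld), (16,Ld)], [(0,La), (4,Lb), (13,Le), (9,Le), (1,Lb), (5,La), (5,Ld), (7,Lc), (1,Lc), (3,Le), (12,Ld), (11,Lf), (10,Ld), (2,Le), (4,Lc), (15,Lc), (0,Ld)], [(16,La), (8,Lb), (13,La), (9,La), (14,Lb), (6,La), (14,Ld), (7,Lf), (16,Lc), (3,Lb), (12,Lf), (11,Le), (10,Lf), (2,Lb), (6,Lc), (15,Lf), (8,Ld)]]"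

definition T1 :: "bsv list list" where "T1 = [[(0,Le), (0,La), (1,La), (2,La), (3,La), (3,Le), (3,Lf), (3,Ld), (12,Ld), (12,Lf), (12,Lc), (10,Lc), (8,Lc), (8,Lf), (8,Ld), (0,Ld), (0,Lf)], [(4,Lb), (16,Le), (1,Lf), (2,Lf), (4,Le), (16,Lb), (1,Lc), (2,Ld), (4,Lf), (12,Lb), (16,Lc), (10,Ld), (4,Lc), (8,Lb), (16,Lf), (1,Ld), (2,Lc)], [(9,Lb), (15,Le), (5,Lb), (15,Lb), (5,Le), (11,Lb), (5,Lf), (11,Le), (5,Ld), (11,La), (14,Ld), (10,La), (6,Ld), (9,La), (15,Ld), (9,Le), (15,Lf)], [(13,Le), (14,La), (14,Lb), (6,Lb), (6,La), (7,Le), (7,Lc), (11,Lc), (13,Lf), (13,La), (14,Le), (10,Lb), (6,Le), (7,La), (7,Lf), (9,Lc), (13,Lc)], [(0,Lb), (16,La), (1,Le), (2,Le), (4,La), (3,Lb), (3,Lc), (11,Ld), (4,Ld), (12,Le), (14,Lc), (10,Lf), (6,Lc), (8,Le), (16,Ld), (9,Ld), (0,Lc)], [(13,Lb), (15,La), (1,Lb), (2,Lb), (5,La), (7,Lb), (5,Lc), (11,Lf), (13,Ld), (12,La), (14,Lf), (10,Le), (6,Lf), (8,La), (7,Ld), (9,Lf), (15,Lc)]]"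

definition T1i :: "bsv list list" where "T1i = [[(1,La), (2,La), (3,La), (4,La), (4,Le), (4,Lf), (4,Ld), (13,Ld), (13,Lf), (13,Lc), (11,Lc), (9,Lc), (9,Lf), (9,Ld), (1,Ld), (1,Lf), (1,Le)], [(0,Le), (2,Lf), (3,Lf), (5,Le), (0,Lb), (2,Lc), (3,Ld), (5,Lf), (13,Lb), (0,Lc), (11,Ld), (5,Lc), (9,Lb), (0,Lf), (2,Ld), (3,Lc), (5,Lb)], [(16,Le), (6,Lb), (16,Lb), (6,Le), (12,Lb), (6,Lf), (12,Le), (6,Ld), (12,La), (15,Ld), (11,La), (7,Ld), (10,La), (16,Ld), (10,Le), (16,Lf), (10,Lb)], [(15,La), (15,Lb), (7,Lb), (7,La), (8,Le), (8,Lc), (12,Lc), (14,Lf), (14,La), (15,Le), (11,Lb), (7,Le), (8,La), (8,Lf), (10,Lc), (14,Lc), (14,Le)], [(0,La), (2,Le), (3,Le), (5,La), (4,Lb), (4,Lc), (12,Ld), (5,Ld), (13,Le), (15,Lc), (11,Lf), (7,Lc), (9,Le), (0,Ld), (10,Ld), (1,Lc), (1,Lb)], [(16,La), (2,Lb), (3,Lb), (6,La), (8,Lb), (6,Lc), (12,Lf), (14,Ld), (13,La), (15,Lf), (11,Le), (7,Lf), (9,La), (8,Ld), (10,Lf), (16,Lc), (14,Lb)]]"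

definition T2 :: "bsv list list" where "T2 = [[(0,Le), (0,Lf), (0,Lc), (2,Lc), (4,Lc), (6,Lc), (6,Lf), (6,Le), (6,La), (7,La), (7,Le), (7,Lb), (3,Lb), (16,Lb), (16,Le), (16,La), (0,La)], [(4,Lb), (8,Ld), (15,Lf), (2,Le), (4,Le), (8,Lf), (15,Ld), (2,Lb), (4,La), (8,Le), (7,Ld), (15,Lb), (3,La), (8,Lb), (16,Ld), (15,Le), (2,La)], [(13,Le), (1,Ld), (13,Lf), (10,Ld), (13,Ld), (10,Lf), (5,Ld), (10,Le), (5,Lf), (10,La), (5,Lc), (11,La), (3,Lc), (12,La), (1,Lc), (13,La), (1,Lf)], [(9,Lb), (9,Lf), (11,Lc), (11,Ld), (12,Ld), (12,Lc), (14,Lf), (14,Lb), (5,Lb), (9,Le), (9,Lc), (11,Lf), (3,Ld), (12,Lf), (14,Lc), (14,Le), (1,Lb)], [(0,Lb), (0,Ld), (15,Lc), (2,Lf), (4,Lf), (8,Lc), (6,Ld), (6,Lb), (5,La), (8,La), (7,Lf), (11,Lb), (3,Le), (12,Lb), (16,Lf), (15,La), (1,La)], [(13,Lb), (9,Ld), (13,Lc), (2,Ld), (4,Ld), (10,Lc), (14,Ld), (10,Lb), (5,Le), (9,La), (7,Lc), (11,Le), (3,Lf), (12,Le), (16,Lc), (14,La), (1,Le)]]"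

definition T2i :: "bsv list list" where "T2i = [[(16,La), (16,Le), (16,Lb), (12,Lb), (8,Lb), (8,Le), (8,La), (9,La), (9,Le), (9,Lf), (9,Lc), (11,Lc), (13,Lc), (15,Lc), (15,Lf), (15,Le), (15,La)], [(0,Le), (16,Ld), (7,Lb), (12,La), (0,Lb), (8,Ld), (7,Le), (11,La), (13,Lb), (0,Ld), (7,Lf), (11,Le), (13,Le), (0,Lf), (7,Ld), (11,Lb), (13,La)], [(2,La), (14,Lc), (3,La), (12,Lc), (4,La), (10,Lc), (5,La), (10,Lf), (5,Le), (10,Ld), (5,Lf), (2,Ld), (5,Ld), (2,Lf), (14,Ld), (2,Le), (14,Lf)], [(1,Le), (1,Lc), (3,Lf), (12,Ld), (4,Lf), (6,Lc), (6,Le), (10,Lb), (1,Lb), (1,Lf), (3,Lc), (3,Ld), (4,Ld), (4,Lc), (6,Lf), (6,Lb), (14,Lb)], [(0,La), (16,Lf), (3,Lb), (12,Le), (4,Lb), (8,Lf), (7,La), (10,La), (9,Lb), (9,Ld), (7,Lc), (11,Lf), (13,Lf), (0,Lc), (15,Ld), (15,Lb), (14,La)], [(1,La), (16,Lc), (3,Le), (12,Lf), (4,Le), (8,Lc), (6,La), (10,Le), (5,Lb), (1,Ld), (5,Lc), (11,Ld), (13,Ld), (2,Lc), (6,Ld), (2,Lb), (14,Le)]]"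

definition T3 :: "bsv list list" where "T3 = [[(1,La), (1,Le), (1,Lb), (5,Lb), (9,Lb), (9,Le), (9,La), (8,La), (8,Le), (8,Lf), (8,Lc), (6,Lc), (4,Lc), (2,Lc), (2,Lf), (2,Le), (2,La)], [(0,Le), (1,Ld), (10,Lb), (5,La), (0,Lb), (9,Ld), (10,Le), (6,La), (4,Lb), (0,Ld), (10,Lf), (6,Le), (4,Le), (0,Lf), (10,Ld), (6,Lb), (4,La)], [(15,La), (3,Lc), (14,La), (5,Lc), (13,La), (7,Lc), (12,La), (7,Lf), (12,Le), (7,Ld), (12,Lf), (15,Ld), (12,Ld), (15,Lf), (3,Ld), (15,Le), (3,Lf)], [(16,Le), (16,Lc), (14,Lf), (5,Ld), (13,Lf), (11,Lc), (11,Le), (7,Lb), (16,Lb), (16,Lf), (14,Lc), (14,Ld), (13,Ld), (13,Lc), (11,Lf), (11,Lb), (3,Lb)], [(0,La), (1,Lf), (14,Lb), (5,Le), (13,Lb), (9,Lf), (10,La), (7,La), (8,Lb), (8,Ld), (10,Lc), (6,Lf), (4,Lf), (0,Lc), (2,Ld), (2,Lb), (3,La)], [(16,La), (1,Lc), (14,Le), (5,Lf), (13,Le), (9,Lc), (11,La), (7,Le), (12,Lb), (16,Ld), (12,Lc), (6,Ld), (4,Ld), (15,Lc), (11,Ld), (15,Lb), (3,Le)]]"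

definition T3i :: "bsv list list" where "T3i = [[(0,Le), (0,La), (16,La), (16,Le), (16,Lb), (3,Lb), (7,Lb), (7,Le), (7,La), (6,La), (6,Le), (6,Lf), (6,Lc), (4,Lc), (2,Lc), (0,Lc), (0,Lf)], [(4,Lb), (2,La), (15,Le), (16,Ld), (8,Lb), (3,La), (15,Lb), (7,Ld), (8,Le), (4,La), (2,Lb), (15,Ld), (8,Lf), (4,Le), (2,Le), (15,Lf), (8,Ld)], [(13,Le), (1,Lf), (13,La), (1,Lc), (12,La), (3,Lc), (11,La), (5,Lc), (10,La), (5,Lf), (10,Le), (5,Ld), (10,Lf), (13,Ld), (10,Ld), (13,Lf), (1,Ld)], [(9,Lb), (1,Lb), (14,Le), (14,Lc), (12,Lf), (3,Ld), (11,Lf), (9,Lc), (9,Le), (5,Lb), (14,Lb), (14,Lf), (12,Lc), (12,Ld), (11,Ld), (11,Lc), (9,Lf)], [(0,Lb), (1,La), (15,La), (16,Lf), (12,Lb), (3,Le), (11,Lb), (7,Lf), (8,La), (5,La), (6,Lb), (6,Ld), (8,Lc), (4,Lf), (2,Lf), (15,Lc), (0,Ld)], [(13,Lb), (1,Le), (14,La), (16,Lc), (12,Le), (3,Lf), (11,Le), (7,Lc), (9,La), (5,Le), (10,Lb), (14,Ld), (10,Lc), (4,Ld), (2,Ld), (13,Lc), (9,Ld)]]"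

definition T4 :: "bsv list list" where "T4 = [[(4,Lb), (4,Le), (4,La), (3,La), (2,La), (2,Le), (2,Lb), (15,Lb), (15,Le), (15,Lf), (15,Ld), (7,Ld), (16,Ld), (8,Ld), (8,Lf), (8,Le), (8,Lb)], [(0,Le), (4,Lc), (6,La), (3,Lb), (0,La), (2,Lc), (6,Le), (7,Lb), (16,La), (0,Lc), (6,Lf), (7,Le), (16,Le), (0,Lf), (6,Lc), (7,La), (16,Lb)], [(9,Lb), (12,Ld), (5,Lb), (3,Ld), (1,Lb), (11,Ld), (14,Lb), (11,Lf), (14,Le), (11,Lc), (14,Lf), (9,Lc), (14,Lc), (9,Lf), (12,Lc), (9,Le), (12,Lf)], [(13,Le), (13,Ld), (5,Lf), (3,Lc), (1,Lf), (10,Ld), (10,Le), (11,La), (13,La), (13,Lf), (5,Ld), (5,Lc), (1,Lc), (1,Ld), (10,Lf), (10,La), (12,La)], [(0,Lb), (4,Lf), (5,La), (3,Le), (1,La), (2,Lf), (6,Lb), (11,Lb), (15,La), (15,Lc), (6,Ld), (7,Lf), (16,Lf), (0,Ld), (8,Lc), (8,La), (12,Lb)], [(13,Lb), (4,Ld), (5,Le), (3,Lf), (1,Le), (2,Ld), (10,Lb), (11,Le), (14,La), (13,Lc), (14,Ld), (7,Lc), (16,Lc), (9,Ld), (10,Lc), (9,La), (12,Le)]]"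

definition T4i :: "bsv list list" where "T4i = [[(4,Lb), (4,Le), (4,La), (3,La), (2,La), (2,Le), (2,Lb), (15,Lb), (15,Le), (15,Lf), (15,Ld), (7,Ld), (16,Ld), (8,Ld), (8,Lf), (8,Le), (8,Lb)], [(0,Le), (4,Lc), (6,La), (3,Lb), (0,La), (2,Lc), (6,Le), (7,Lb), (16,La), (0,Lc), (6,Lf), (7,Le), (16,Le), (0,Lf), (6,Lc), (7,La), (16,Lb)], [(9,Lb), (12,Ld), (5,Lb), (3,Ld), (1,Lb), (11,Ld), (14,Lb), (11,Lf), (14,Le), (11,Lc), (14,Lf), (9,Lc), (14,Lc), (9,Lf), (12,Lc), (9,Le), (12,Lf)], [(13,Le), (13,Ld), (5,Lf), (3,Lc), (1,Lf), (10,Ld), (10,Le), (11,La), (13,La), (13,Lf), (5,Ld), (5,Lc), (1,Lc), (1,Ld), (10,Lf), (10,La), (12,La)], [(0,Lb), (4,Lf), (5,La), (3,Le), (1,La), (2,Lf), (6,Lb), (11,Lb), (15,La), (15,Lc), (6,Ld), (7,Lf), (16,Lf), (0,Ld), (8,Lc), (8,La), (12,Lb)], [(13,Lb), (4,Ld), (5,Le), (3,Lf), (1,Le), (2,Ld), (10,Lb), (11,Le), (14,La), (13,Lc), (14,Ld), (7,Lc), (16,Lc), (9,Ld), (10,Lc), (9,La), (12,Le)]]"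

definition T5 :: "bsv list list" where "T5 = [[(4,Lb), (4,Le), (4,Lf), (4,Lc), (2,Lc), (2,Lf), (2,Ld), (10,Ld), (1,Ld), (1,Lf), (1,Lc), (16,Lc), (16,Lf), (16,Le), (16,Lb), (12,Lb), (8,Lb)], [(0,Le), (3,La), (12,Ld), (8,Lc), (0,Lf), (2,La), (3,Ld), (10,Lc), (0,Ld), (1,La), (3,Lf), (12,Lc), (8,Ld), (0,La), (3,Le), (12,Lf), (8,Lf)], [(13,Le), (6,La), (13,Lf), (6,Le), (13,Lc), (6,Lb), (11,Lc), (10,Lb), (9,Lc), (14,Lb), (7,Lc), (14,Le), (7,Lf), (14,La), (7,Le), (13,La), (7,La)], [(9,Lb), (5,Le), (5,Ld), (6,Ld), (15,Lf), (15,Lb), (11,Le), (10,La), (9,Le), (5,Lb), (5,Lf), (14,Ld), (15,Ld), (15,Le), (11,Lb), (11,La), (9,La)], [(0,Lb), (4,La), (4,Ld), (6,Lc), (0,Lc), (2,Le), (11,Ld), (10,Lf), (9,Ld), (1,Le), (3,Lc), (14,Lc), (16,Ld), (16,La), (3,Lb), (12,Le), (8,Le)], [(13,Lb), (5,La), (13,Ld), (6,Lf), (15,Lc), (2,Lb), (11,Lf), (10,Le), (9,Lf), (1,Lb), (5,Lc), (14,Lf), (7,Ld), (15,La), (7,Lb), (12,La), (8,La)]]"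

definition T5i :: "bsv list list" where "T5i = [[(13,Lb), (9,Lb), (5,Lb), (1,Lb), (1,Le), (1,Lf), (1,Lc), (16,Lc), (16,Lf), (16,Ld), (7,Ld), (15,Ld), (15,Lf), (15,Lc), (13,Lc), (13,Lf), (13,Le)], [(0,Le), (9,Lf), (5,Lf), (14,Le), (0,La), (9,Ld), (5,Lc), (14,Lf), (16,La), (0,Ld), (7,Lc), (14,Ld), (15,La), (0,Lf), (9,Lc), (5,Ld), (14,La)], [(4,Le), (10,La), (4,La), (10,Le), (3,La), (10,Lf), (3,Le), (10,Lc), (3,Lb), (8,Lc), (7,Lb), (6,Lc), (11,Lb), (4,Lc), (11,Le), (4,Lf), (11,La)], [(8,Lb), (8,La), (6,La), (6,Lb), (2,Le), (2,Ld), (3,Ld), (12,Lf), (12,Lb), (8,Le), (7,La), (6,Le), (2,Lb), (2,Lf), (11,Ld), (12,Ld), (12,Le)], [(0,Lb), (9,Le), (5,Le), (14,Lb), (1,La), (1,Ld), (3,Lc), (14,Lc), (16,Le), (8,Ld), (7,Lf), (6,Ld), (15,Le), (0,Lc), (11,Lc), (13,Ld), (13,La)], [(4,Lb), (9,La), (5,La), (10,Lb), (2,La), (10,Ld), (3,Lf), (12,Lc), (16,Lb), (8,Lf), (7,Le), (6,Lf), (15,Lb), (2,Lc), (11,Lf), (4,Ld), (12,La)]]"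

definition T6 :: "bsv list list" where "T6 = [[(1,Le), (1,Lb), (5,Lb), (5,Le), (5,La), (6,La), (7,La), (7,Le), (7,Lb), (11,Lb), (11,Le), (11,Lf), (11,Ld), (2,Ld), (10,Ld), (1,Ld), (1,Lf)], [(2,La), (10,Lb), (9,Le), (5,Lc), (3,La), (6,Lb), (9,La), (7,Lc), (3,Le), (2,Lb), (10,La), (9,Lc), (3,Lf), (2,Le), (10,Le), (9,Lf), (3,Lc)], [(0,Le), (14,Lf), (0,Lb), (14,Ld), (4,Lb), (6,Ld), (8,Lb), (15,Ld), (12,Lb), (15,Lf), (12,Le), (15,Lc), (12,Lf), (0,Lc), (12,Lc), (0,Lf), (14,Lc)], [(16,La), (14,La), (13,Le), (13,Ld), (4,Lf), (6,Lc), (8,Lf), (16,Ld), (16,Le), (15,La), (13,La), (13,Lf), (4,Ld), (4,Lc), (8,Lc), (8,Ld), (16,Lf)], [(1,La), (14,Lb), (9,Lb), (5,Lf), (4,La), (6,Le), (8,La), (7,Lf), (3,Lb), (15,Lb), (11,La), (11,Lc), (3,Ld), (2,Lf), (10,Lf), (9,Ld), (1,Lc)], [(0,La), (14,Le), (13,Lb), (5,Ld), (4,Le), (6,Lf), (8,Le), (7,Ld), (16,Lb), (15,Le), (12,La), (13,Lc), (12,Ld), (2,Lc), (10,Lc), (0,Ld), (16,Lc)]]"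

definition T6i :: "bsv list list" where "T6i = [[(0,Lf), (0,Le), (0,Lb), (4,Lb), (4,Le), (4,La), (5,La), (6,La), (6,Le), (6,Lb), (10,Lb), (10,Le), (10,Lf), (10,Ld), (1,Ld), (9,Ld), (0,Ld)], [(2,Lc), (1,La), (9,Lb), (8,Le), (4,Lc), (2,La), (5,Lb), (8,La), (6,Lc), (2,Le), (1,Lb), (9,La), (8,Lc), (2,Lf), (1,Le), (9,Le), (8,Lf)], [(13,Lc), (16,Le), (13,Lf), (16,Lb), (13,Ld), (3,Lb), (5,Ld), (7,Lb), (14,Ld), (11,Lb), (14,Lf), (11,Le), (14,Lc), (11,Lf), (16,Lc), (11,Lc), (16,Lf)], [(15,Lf), (15,La), (13,La), (12,Le), (12,Ld), (3,Lf), (5,Lc), (7,Lf), (15,Ld), (15,Le), (14,La), (12,La), (12,Lf), (3,Ld), (3,Lc), (7,Lc), (7,Ld)], [(0,Lc), (0,La), (13,Lb), (8,Lb), (4,Lf), (3,La), (5,Le), (7,La), (6,Lf), (2,Lb), (14,Lb), (10,La), (10,Lc), (2,Ld), (1,Lf), (9,Lf), (8,Ld)], [(15,Lc), (16,La), (13,Le), (12,Lb), (4,Ld), (3,Le), (5,Lf), (7,Le), (6,Ld), (15,Lb), (14,Le), (11,La), (12,Lc), (11,Ld), (1,Lc), (9,Lc), (16,Ld)]]"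

definition T7 :: "bsv list list" where "T7 = [[(2,Lc), (2,Lf), (2,Le), (2,Lb), (15,Lb), (11,Lb), (7,Lb), (7,Le), (7,Lf), (7,Lc), (5,Lc), (5,Lf), (5,Ld), (13,Ld), (4,Ld), (4,Lf), (4,Lc)], [(15,Lc), (11,Ld), (3,La), (6,Le), (15,Lf), (11,Lf), (3,Le), (6,La), (15,Ld), (11,Lc), (3,Lf), (5,La), (6,Ld), (13,Lc), (3,Ld), (4,La), (6,Lf)], [(0,Le), (10,Lf), (0,La), (10,Le), (16,La), (10,La), (16,Le), (9,La), (16,Lf), (9,Le), (16,Lc), (9,Lb), (14,Lc), (13,Lb), (12,Lc), (0,Lb), (10,Lc)], [(0,Ld), (1,Ld), (1,Le), (14,Lb), (14,La), (12,La), (12,Lb), (8,Le), (8,Ld), (9,Ld), (1,Lf), (1,Lb), (14,Le), (13,La), (12,Le), (8,Lb), (8,Lf)], [(0,Lc), (2,Ld), (2,La), (6,Lb), (15,Le), (11,Le), (3,Lb), (7,La), (7,Ld), (9,Lc), (3,Lc), (5,Le), (14,Ld), (13,Lf), (12,Ld), (4,Le), (6,Lc)], [(0,Lf), (10,Ld), (1,La), (10,Lb), (15,La), (11,La), (16,Lb), (8,La), (16,Ld), (9,Lf), (1,Lc), (5,Lb), (14,Lf), (13,Le), (12,Lf), (4,Lb), (8,Lc)]]"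

definition T7i :: "bsv list list" where "T7i = [[(2,Lc), (2,Lf), (2,Le), (2,Lb), (15,Lb), (11,Lb), (7,Lb), (7,Le), (7,Lf), (7,Lc), (5,Lc), (5,Lf), (5,Ld), (13,Ld), (4,Ld), (4,Lf), (4,Lc)], [(15,Lc), (11,Ld), (3,La), (6,Le), (15,Lf), (11,Lf), (3,Le), (6,La), (15,Ld), (11,Lc), (3,Lf), (5,La), (6,Ld), (13,Lc), (3,Ld), (4,La), (6,Lf)], [(0,Le), (10,Lf), (0,La), (10,Le), (16,La), (10,La), (16,Le), (9,La), (16,Lf), (9,Le), (16,Lc), (9,Lb), (14,Lc), (13,Lb), (12,Lc), (0,Lb), (10,Lc)], [(0,Ld), (1,Ld), (1,Le), (14,Lb), (14,La), (12,La), (12,Lb), (8,Le), (8,Ld), (9,Ld), (1,Lf), (1,Lb), (14,Le), (13,La), (12,Le), (8,Lb), (8,Lf)], [(0,Lc), (2,Ld), (2,La), (6,Lb), (15,Le), (11,Le), (3,Lb), (7,La), (7,Ld), (9,Lc), (3,Lc), (5,Le), (14,Ld), (13,Lf), (12,Ld), (4,Le), (6,Lc)], [(0,Lf), (10,Ld), (1,La), (10,Lb), (15,La), (11,La), (16,Lb), (8,La), (16,Ld), (9,Lf), (1,Lc), (5,Lb), (14,Lf), (13,Le), (12,Lf), (4,Lb), (8,Lc)]]"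

definition T8 :: "bsv list list" where "T8 = [[(2,Lc), (4,Lc), (4,Lf), (4,Ld), (13,Ld), (5,Ld), (5,Lf), (5,Lc), (7,Lc), (7,Lf), (7,Le), (7,Lb), (11,Lb), (15,Lb), (2,Lb), (2,Le), (2,Lf)], [(15,Lc), (6,Lf), (4,La), (3,Ld), (13,Lc), (6,Ld), (5,La), (3,Lf), (11,Lc), (15,Ld), (6,La), (3,Le), (11,Lf), (15,Lf), (6,Le), (3,La), (11,Ld)], [(0,Le), (10,Lc), (0,Lb), (12,Lc), (13,Lb), (14,Lc), (9,Lb), (16,Lc), (9,Le), (16,Lf), (9,La), (16,Le), (10,La), (16,La), (10,Le), (0,La), (10,Lf)], [(0,Ld), (8,Lf), (8,Lb), (12,Le), (13,La), (14,Le), (1,Lb), (1,Lf), (9,Ld), (8,Ld), (8,Le), (12,Lb), (12,La), (14,La), (14,Lb), (1,Le), (1,Ld)], [(0,Lc), (6,Lc), (4,Le), (12,Ld), (13,Lf), (14,Ld), (5,Le), (3,Lc), (9,Lc), (7,Ld), (7,La), (3,Lb), (11,Le), (15,Le), (6,Lb), (2,La), (2,Ld)], [(0,Lf), (8,Lc), (4,Lb), (12,Lf), (13,Le), (14,Lf), (5,Lb), (1,Lc), (9,Lf), (16,Ld), (8,La), (16,Lb), (11,La), (15,La), (10,Lb), (1,La), (10,Ld)]]"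

definition T8i :: "bsv list list" where "T8i = [[(15,Lc), (15,Lf), (15,Le), (15,Lb), (2,Lb), (6,Lb), (10,Lb), (10,Le), (10,Lf), (10,Lc), (12,Lc), (12,Lf), (12,Ld), (4,Ld), (13,Ld), (13,Lf), (13,Lc)], [(2,Lc), (6,Ld), (14,La), (11,Le), (2,Lf), (6,Lf), (14,Le), (11,La), (2,Ld), (6,Lc), (14,Lf), (12,La), (11,Ld), (4,Lc), (14,Ld), (13,La), (11,Lf)], [(0,Le), (7,Lf), (0,La), (7,Le), (1,La), (7,La), (1,Le), (8,La), (1,Lf), (8,Le), (1,Lc), (8,Lb), (3,Lc), (4,Lb), (5,Lc), (0,Lb), (7,Lc)], [(0,Ld), (16,Ld), (16,Le), (3,Lb), (3,La), (5,La), (5,Lb), (9,Le), (9,Ld), (8,Ld), (16,Lf), (16,Lb), (3,Le), (4,La), (5,Le), (9,Lb), (9,Lf)], [(0,Lc), (15,Ld), (15,La), (11,Lb), (2,Le), (6,Le), (14,Lb), (10,La), (10,Ld), (8,Lc), (14,Lc), (12,Le), (3,Ld), (4,Lf), (5,Ld), (13,Le), (11,Lc)], [(0,Lf), (7,Ld), (16,La), (7,Lb), (2,La), (6,La), (1,Lb), (9,La), (1,Ld), (8,Lf), (16,Lc), (12,Lb), (3,Lf), (4,Le), (5,Lf), (13,Lb), (9,Lc)]]"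

definition T9 :: "bsv list list" where "T9 = [[(1,Le), (1,Lb), (14,Lb), (10,Lb), (6,Lb), (6,Le), (6,Lf), (6,Lc), (4,Lc), (4,Lf), (4,Ld), (12,Ld), (3,Ld), (3,Lf), (3,Lc), (1,Lc), (1,Lf)], [(2,La), (5,Le), (14,Lf), (10,Lf), (2,Le), (5,La), (14,Ld), (10,Lc), (2,Lf), (4,La), (5,Ld), (12,Lc), (2,Ld), (3,La), (5,Lf), (14,Lc), (10,Ld)], [(16,La), (9,Le), (15,La), (9,La), (15,Le), (8,La), (15,Lf), (8,Le), (15,Lc), (8,Lb), (13,Lc), (12,Lb), (11,Lc), (16,Lb), (9,Lc), (16,Le), (9,Lf)], [(0,Le), (13,Lb), (13,La), (11,La), (11,Lb), (7,Le), (7,Ld), (8,Ld), (0,Lf), (0,Lb), (13,Le), (12,La), (11,Le), (7,Lb), (7,Lf), (16,Ld), (0,Ld)], [(1,La), (5,Lb), (14,Le), (10,Le), (2,Lb), (6,La), (6,Ld), (8,Lc), (2,Lc), (4,Le), (13,Ld), (12,Lf), (11,Ld), (3,Le), (5,Lc), (16,Lc), (1,Ld)], [(0,La), (9,Lb), (14,La), (10,La), (15,Lb), (7,La), (15,Ld), (8,Lf), (0,Lc), (4,Lb), (13,Lf), (12,Le), (11,Lf), (3,Lb), (7,Lc), (16,Lf), (9,Ld)]]"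

definition T9i :: "bsv list list" where "T9i = [[(0,Lf), (0,Le), (0,Lb), (13,Lb), (9,Lb), (5,Lb), (5,Le), (5,Lf), (5,Lc), (3,Lc), (3,Lf), (3,Ld), (11,Ld), (2,Ld), (2,Lf), (2,Lc), (0,Lc)], [(9,Ld), (1,La), (4,Le), (13,Lf), (9,Lf), (1,Le), (4,La), (13,Ld), (9,Lc), (1,Lf), (3,La), (4,Ld), (11,Lc), (1,Ld), (2,La), (4,Lf), (13,Lc)], [(8,Lf), (15,La), (8,Le), (14,La), (8,La), (14,Le), (7,La), (14,Lf), (7,Le), (14,Lc), (7,Lb), (12,Lc), (11,Lb), (10,Lc), (15,Lb), (8,Lc), (15,Le)], [(16,Ld), (16,Le), (12,Lb), (12,La), (10,La), (10,Lb), (6,Le), (6,Ld), (7,Ld), (16,Lf), (16,Lb), (12,Le), (11,La), (10,Le), (6,Lb), (6,Lf), (15,Ld)], [(0,Ld), (0,La), (4,Lb), (13,Le), (9,Le), (1,Lb), (5,La), (5,Ld), (7,Lc), (1,Lc), (3,Le), (12,Ld), (11,Lf), (10,Ld), (2,Le), (4,Lc), (15,Lc)], [(8,Ld), (16,La), (8,Lb), (13,La), (9,La), (14,Lb), (6,La), (14,Ld), (7,Lf), (16,Lc), (3,Lb), (12,Lf), (11,Le), (10,Lf), (2,Lb), (6,Lc), (15,Lf)]]"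

definition T10 :: "bsv list list" where "T10 = [[(2,Lc), (4,Lc), (6,Lc), (6,Lf), (6,Ld), (14,Ld), (14,Lf), (14,Le), (14,La), (13,La), (12,La), (11,La), (11,Le), (11,Lf), (11,Ld), (2,Ld), (2,Lf)], [(15,Lc), (4,Ld), (10,Lc), (6,Lb), (15,Lf), (13,Ld), (12,Lc), (10,Lb), (15,Le), (13,Lf), (12,Lf), (10,Le), (15,Lb), (13,Lc), (12,Ld), (10,Lf), (2,Lb)], [(0,Ld), (4,La), (8,Ld), (5,La), (16,Ld), (5,Le), (16,Lf), (5,Lb), (16,Le), (9,Lb), (16,Lb), (9,Le), (3,Lb), (9,Lf), (3,Le), (9,Ld), (3,La)], [(0,Le), (4,Lb), (8,Le), (7,La), (7,Lf), (5,Lc), (1,Lc), (1,Le), (0,La), (0,Lb), (8,Lb), (8,La), (7,Le), (7,Lc), (3,Lc), (1,Lf), (1,La)], [(0,Lc), (4,Lf), (8,Lc), (6,Le), (15,Ld), (5,Ld), (14,Lc), (14,Lb), (15,La), (13,Le), (12,Le), (10,La), (11,Lb), (11,Lc), (3,Ld), (10,Ld), (2,Le)], [(0,Lf), (4,Le), (8,Lf), (6,La), (7,Ld), (5,Lf), (16,Lc), (1,Lb), (16,La), (13,Lb), (12,Lb), (9,La), (7,Lb), (9,Lc), (3,Lf), (1,Ld), (2,La)]]"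

definition T10i :: "bsv list list" where "T10i = [[(8,Ld), (16,Ld), (16,Lf), (16,Lc), (1,Lc), (3,Lc), (3,Lf), (3,Ld), (11,Ld), (11,Lf), (11,Le), (11,La), (10,La), (9,La), (8,La), (8,Le), (8,Lf)], [(9,Ld), (7,Lf), (16,Lb), (12,Lc), (1,Ld), (7,Lc), (3,Lb), (12,Lf), (10,Ld), (9,Lc), (7,Lb), (12,Le), (10,Lf), (9,Lf), (7,Le), (12,Lb), (10,Lc)], [(0,Le), (6,Ld), (0,La), (14,Ld), (1,La), (5,Ld), (2,La), (13,Ld), (2,Le), (13,Lf), (2,Lb), (13,Le), (6,Lb), (13,Lb), (6,Le), (0,Lb), (6,Lf)], [(0,Lc), (15,Lf), (15,La), (14,Le), (1,Lb), (5,Le), (4,La), (4,Lf), (2,Lc), (15,Lc), (15,Le), (14,La), (14,Lb), (5,Lb), (5,La), (4,Le), (4,Lc)], [(0,Ld), (7,Ld), (16,Le), (14,Lc), (1,Lf), (5,Lc), (3,Le), (12,Ld), (2,Ld), (11,Lc), (11,Lb), (12,La), (10,Le), (9,Le), (7,La), (8,Lb), (8,Lc)], [(0,Lf), (15,Ld), (16,La), (14,Lf), (1,Le), (5,Lf), (3,La), (4,Ld), (2,Lf), (13,Lc), (15,Lb), (13,La), (10,Lb), (9,Lb), (6,La), (4,Lb), (6,Lc)]]"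

definition T11 :: "bsv list list" where "T11 = [[(2,Lc), (2,Lf), (2,Ld), (11,Ld), (11,Lf), (11,Le), (11,La), (12,La), (13,La), (14,La), (14,Le), (14,Lf), (14,Ld), (6,Ld), (6,Lf), (6,Lc), (4,Lc)], [(15,Lc), (2,Lb), (10,Lf), (12,Ld), (13,Lc), (15,Lb), (10,Le), (12,Lf), (13,Lf), (15,Le), (10,Lb), (12,Lc), (13,Ld), (15,Lf), (6,Lb), (10,Lc), (4,Ld)], [(0,Ld), (3,La), (9,Ld), (3,Le), (9,Lf), (3,Lb), (9,Le), (16,Lb), (9,Lb), (16,Le), (5,Lb), (16,Lf), (5,Le), (16,Ld), (5,La), (8,Ld), (4,La)], [(0,Le), (1,La), (1,Lf), (3,Lc), (7,Lc), (7,Le), (8,La), (8,Lb), (0,Lb), (0,La), (1,Le), (1,Lc), (5,Lc), (7,Lf), (7,La), (8,Le), (4,Lb)], [(0,Lc), (2,Le), (10,Ld), (3,Ld), (11,Lc), (11,Lb), (10,La), (12,Le), (13,Le), (15,La), (14,Lb), (14,Lc), (5,Ld), (15,Ld), (6,Le), (8,Lc), (4,Lf)], [(0,Lf), (2,La), (1,Ld), (3,Lf), (9,Lc), (7,Lb), (9,La), (12,Lb), (13,Lb), (16,La), (1,Lb), (16,Lc), (5,Lf), (7,Ld), (6,La), (8,Lf), (4,Le)]]"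

definition T11i :: "bsv list list" where "T11i = [[(9,Ld), (1,Ld), (1,Lf), (1,Lc), (16,Lc), (14,Lc), (14,Lf), (14,Ld), (6,Ld), (6,Lf), (6,Le), (6,La), (7,La), (8,La), (9,La), (9,Le), (9,Lf)], [(8,Ld), (10,Lf), (1,Lb), (5,Lc), (16,Ld), (10,Lc), (14,Lb), (5,Lf), (7,Ld), (8,Lc), (10,Lb), (5,Le), (7,Lf), (8,Lf), (10,Le), (5,Lb), (7,Lc)], [(0,Le), (11,Ld), (0,La), (3,Ld), (16,La), (12,Ld), (15,La), (4,Ld), (15,Le), (4,Lf), (15,Lb), (4,Le), (11,Lb), (4,Lb), (11,Le), (0,Lb), (11,Lf)], [(0,Lc), (2,Lf), (2,La), (3,Le), (16,Lb), (12,Le), (13,La), (13,Lf), (15,Lc), (2,Lc), (2,Le), (3,La), (3,Lb), (12,Lb), (12,La), (13,Le), (13,Lc)], [(0,Ld), (10,Ld), (1,Le), (3,Lc), (16,Lf), (12,Lc), (14,Le), (5,Ld), (15,Ld), (6,Lc), (6,Lb), (5,La), (7,Le), (8,Le), (10,La), (9,Lb), (9,Lc)], [(0,Lf), (2,Ld), (1,La), (3,Lf), (16,Le), (12,Lf), (14,La), (13,Ld), (15,Lf), (4,Lc), (2,Lb), (4,La), (7,Lb), (8,Lb), (11,La), (13,Lb), (11,Lc)]]"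

definition T12 :: "bsv list list" where "T12 = [[(0,La), (1,La), (2,La), (3,La), (4,La), (5,La), (6,La), (7,La), (8,La), (9,La), (10,La), (11,La), (12,La), (13,La), (14,La), (15,La), (16,La)], [(0,Lb), (1,Lb), (2,Lb), (3,Lb), (4,Lb), (5,Lb), (6,Lb), (7,Lb), (8,Lb), (9,Lb), (10,Lb), (11,Lb), (12,Lb), (13,Lb), (14,Lb), (15,Lb), (16,Lb)], [(0,Lc), (1,Lc), (2,Lc), (3,Lc), (4,Lc), (5,Lc), (6,Lc), (7,Lc), (8,Lc), (9,Lc), (10,Lc), (11,Lc), (12,Lc), (13,Lc), (14,Lc), (15,Lc), (16,Lc)], [(0,Ld), (1,Ld), (2,Ld), (3,Ld), (4,Ld), (5,Ld), (6,Ld), (7,Ld), (8,Ld), (9,Ld), (10,Ld), (11,Ld), (12,Ld), (13,Ld), (14,Ld), (15,Ld), (16,Ld)], [(0,Le), (1,Le), (2,Le), (3,Le), (4,Le), (5,Le), (6,Le), (7,Le), (8,Le), (9,Le), (10,Le), (11,Le), (12,Le), (13,Le), (14,Le), (15,Le), (16,Le)], [(0,Lf), (1,Lf), (2,Lf), (3,Lf), (4,Lf), (5,Lf), (6,Lf), (7,Lf), (8,Lf), (9,Lf), (10,Lf), (11,Lf), (12,Lf), (13,Lf), (14,Lf), (15,Lf), (16,Lf)]]"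

definition T12i :: "bsv list list" where "T12i = [[(0,La), (1,La), (2,La), (3,La), (4,La), (5,La), (6,La), (7,La), (8,La), (9,La), (10,La), (11,La), (12,La), (13,La), (14,La), (15,La), (16,La)], [(0,Lb), (1,Lb), (2,Lb), (3,Lb), (4,Lb), (5,Lb), (6,Lb), (7,Lb), (8,Lb), (9,Lb), (10,Lb), (11,Lb), (12,Lb), (13,Lb), (14,Lb), (15,Lb), (16,Lb)], [(0,Lc), (1,Lc), (2,Lc), (3,Lc), (4,Lc), (5,Lc), (6,Lc), (7,Lc), (8,Lc), (9,Lc), (10,Lc), (11,Lc), (12,Lc), (13,Lc), (14,Lc), (15,Lc), (16,Lc)], [(0,Ld), (1,Ld), (2,Ld), (3,Ld), (4,Ld), (5,Ld), (6,Ld), (7,Ld), (8,Ld), (9,Ld), (10,Ld), (11,Ld), (12,Ld), (13,Ld), (14,Ld), (15,Ld), (16,Ld)], [(0,Le), (1,Le), (2,Le), (3,Le), (4,Le), (5,Le), (6,Le), (7,Le), (8,Le), (9,Le), (10,Le), (11,Le), (12,Le), (13,Le), (14,Le), (15,Le), (16,Le)], [(0,Lf), (1,Lf), (2,Lf), (3,Lf), (4,Lf), (5,Lf), (6,Lf), (7,Lf), (8,Lf), (9,Lf), (10,Lf), (11,Lf), (12,Lf), (13,Lf), (14,Lf), (15,Lf), (16,Lf)]]"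

definition T13 :: "bsv list list" where "T13 = [[(0,Lb), (4,Lb), (4,Le), (4,La), (3,La), (3,Le), (3,Lf), (3,Lc), (1,Lc), (16,Lc), (14,Lc), (14,Lf), (14,Le), (14,La), (13,La), (13,Le), (13,Lb)], [(0,La), (12,Lb), (4,Ld), (5,Le), (1,La), (16,Lb), (12,Ld), (5,Lf), (1,Le), (16,Le), (12,Lf), (5,Ld), (1,Lb), (16,La), (12,Le), (13,Ld), (5,Lb)], [(0,Lc), (8,La), (2,Lc), (7,La), (2,Lf), (7,Le), (2,Ld), (7,Lf), (10,Ld), (7,Ld), (10,Lf), (15,Ld), (10,Le), (15,Lf), (10,La), (15,Lc), (9,La)], [(0,Ld), (8,Lf), (6,Lc), (6,Le), (2,Lb), (11,Lb), (11,Lf), (9,Lc), (9,Ld), (8,Ld), (8,Lc), (6,Lf), (6,Lb), (15,Lb), (11,Le), (11,Lc), (9,Lf)], [(0,Le), (8,Lb), (4,Lf), (5,La), (2,La), (3,Lb), (3,Ld), (5,Lc), (1,Lf), (16,Lf), (12,Lc), (14,Ld), (14,Lb), (15,La), (12,La), (13,Lf), (9,Lb)], [(0,Lf), (8,Le), (4,Lc), (6,La), (2,Le), (7,Lb), (11,Ld), (7,Lc), (1,Ld), (16,Ld), (10,Lc), (6,Ld), (10,Lb), (15,Le), (11,La), (13,Lc), (9,Le)]]"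

definition T13i :: "bsv list list" where "T13i = [[(0,Lb), (4,Lb), (4,Le), (4,La), (3,La), (3,Le), (3,Lf), (3,Lc), (1,Lc), (16,Lc), (14,Lc), (14,Lf), (14,Le), (14,La), (13,La), (13,Le), (13,Lb)], [(0,La), (12,Lb), (4,Ld), (5,Le), (1,La), (16,Lb), (12,Ld), (5,Lf), (1,Le), (16,Le), (12,Lf), (5,Ld), (1,Lb), (16,La), (12,Le), (13,Ld), (5,Lb)], [(0,Lc), (8,La), (2,Lc), (7,La), (2,Lf), (7,Le), (2,Ld), (7,Lf), (10,Ld), (7,Ld), (10,Lf), (15,Ld), (10,Le), (15,Lf), (10,La), (15,Lc), (9,La)], [(0,Ld), (8,Lf), (6,Lc), (6,Le), (2,Lb), (11,Lb), (11,Lf), (9,Lc), (9,Ld), (8,Ld), (8,Lc), (6,Lf), (6,Lb), (15,Lb), (11,Le), (11,Lc), (9,Lf)], [(0,Le), (8,Lb), (4,Lf), (5,La), (2,La), (3,Lb), (3,Ld), (5,Lc), (1,Lf), (16,Lf), (12,Lc), (14,Ld), (14,Lb), (15,La), (12,La), (13,Lf), (9,Lb)], [(0,Lf), (8,Le), (4,Lc), (6,La), (2,Le), (7,Lb), (11,Ld), (7,Lc), (1,Ld), (16,Ld), (10,Lc), (6,Ld), (10,Lb), (15,Le), (11,La), (13,Lc), (9,Le)]]"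

definition T14 :: "bsv list list" where "T14 = [[(0,Lb), (4,Lb), (4,Le), (4,Lf), (4,Lc), (6,Lc), (6,Lf), (6,Ld), (15,Ld), (7,Ld), (7,Lf), (7,Lc), (9,Lc), (9,Lf), (9,Le), (9,Lb), (13,Lb)], [(0,Lf), (8,Le), (5,La), (13,Ld), (0,Lc), (8,Lf), (6,La), (5,Ld), (15,Lc), (8,Ld), (7,La), (5,Lf), (13,Lc), (0,Ld), (8,La), (5,Le), (13,Lf)], [(1,La), (12,Le), (2,La), (12,Lf), (2,Le), (12,Lc), (2,Lb), (14,Lc), (15,Lb), (16,Lc), (11,Lb), (1,Lc), (11,Le), (1,Lf), (11,La), (1,Le), (12,La)], [(16,La), (16,Lb), (3,Le), (3,Ld), (2,Ld), (10,Lf), (10,Lb), (14,Le), (15,La), (16,Le), (3,Lb), (3,Lf), (11,Ld), (10,Ld), (10,Le), (14,Lb), (14,La)], [(0,Le), (8,Lb), (4,La), (4,Ld), (2,Lc), (8,Lc), (6,Le), (14,Ld), (15,Lf), (16,Ld), (7,Le), (5,Lc), (11,Lc), (9,Ld), (9,La), (5,Lb), (13,Le)], [(0,La), (12,Lb), (3,La), (12,Ld), (2,Lf), (10,Lc), (6,Lb), (14,Lf), (15,Le), (16,Lf), (7,Lb), (3,Lc), (11,Lf), (1,Ld), (10,La), (1,Lb), (13,La)]]"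

definition T14i :: "bsv list list" where "T14i = [[(0,Lf), (0,Lc), (2,Lc), (2,Lf), (2,Le), (2,Lb), (6,Lb), (10,Lb), (14,Lb), (14,Le), (14,Lf), (14,Lc), (16,Lc), (16,Lf), (16,Ld), (8,Ld), (0,Ld)], [(0,La), (15,Lf), (6,Lc), (10,Ld), (1,La), (15,Le), (6,Lf), (10,Lf), (1,Le), (15,La), (6,Ld), (10,Lc), (1,Lf), (16,La), (15,Ld), (8,Lc), (1,Ld)], [(4,Lb), (11,Lc), (4,Le), (11,Lf), (4,La), (11,Le), (5,La), (11,La), (5,Le), (12,La), (5,Lf), (12,Le), (5,Lc), (12,Lb), (7,Lc), (8,Lb), (9,Lc)], [(13,Lb), (13,Lf), (4,Ld), (3,Ld), (3,Le), (7,Lb), (7,La), (9,La), (9,Lb), (13,Le), (13,Ld), (12,Ld), (3,Lf), (3,Lb), (7,Le), (8,La), (9,Le)], [(0,Le), (15,Lc), (4,Lc), (2,Ld), (2,La), (15,Lb), (6,Le), (10,Le), (1,Lb), (14,La), (14,Ld), (12,Lc), (1,Lc), (16,Le), (7,Ld), (8,Lf), (9,Ld)], [(0,Lb), (13,Lc), (4,Lf), (11,Ld), (3,La), (11,Lb), (6,La), (10,La), (5,Lb), (13,La), (5,Ld), (12,Lf), (3,Lc), (16,Lb), (7,Lf), (8,Le), (9,Lf)]]"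

definition T15 :: "bsv list list" where "T15 = [[(1,La), (1,Le), (1,Lb), (14,Lb), (14,Le), (14,Lf), (14,Ld), (6,Ld), (15,Ld), (7,Ld), (7,Lf), (7,Le), (7,Lb), (3,Lb), (3,Le), (3,La), (2,La)], [(16,La), (1,Lc), (5,Le), (6,Lb), (15,La), (16,Lc), (5,Lf), (6,Le), (15,Le), (16,Lf), (5,Lc), (6,La), (15,Lb), (16,Le), (3,Lc), (5,La), (2,Lb)], [(0,Lb), (10,Ld), (13,Lb), (10,Lf), (13,Le), (10,Lc), (13,Lf), (8,Lc), (13,Lc), (8,Lf), (11,Lc), (8,Le), (11,Lf), (8,Lb), (11,Ld), (4,Lb), (2,Ld)], [(0,Lf), (9,Ld), (9,Le), (10,La), (12,La), (12,Lf), (4,Ld), (4,Lc), (0,Lc), (0,Ld), (9,Lf), (9,La), (11,La), (12,Le), (12,Ld), (4,Lf), (2,Lc)], [(0,La), (1,Lf), (5,Lb), (10,Lb), (14,La), (14,Lc), (5,Ld), (6,Lf), (15,Lf), (16,Ld), (7,Lc), (7,La), (11,Lb), (16,Lb), (3,Lf), (4,La), (2,Le)], [(0,Le), (1,Ld), (9,Lb), (10,Le), (13,La), (12,Lc), (13,Ld), (6,Lc), (15,Lc), (8,Ld), (9,Lc), (8,La), (11,Le), (12,Lb), (3,Ld), (4,Le), (2,Lf)]]"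

definition T15i :: "bsv list list" where "T15i = [[(0,Le), (0,La), (16,La), (15,La), (15,Le), (15,Lb), (11,Lb), (11,Le), (11,Lf), (11,Ld), (3,Ld), (12,Ld), (4,Ld), (4,Lf), (4,Le), (4,Lb), (0,Lb)], [(0,Lc), (2,La), (16,Lb), (13,La), (15,Lc), (2,Le), (3,Lb), (12,La), (13,Lc), (2,Lf), (3,Le), (12,Le), (13,Lf), (2,Lc), (3,La), (12,Lb), (13,Le)], [(8,Ld), (1,Lb), (16,Ld), (14,Lb), (7,Ld), (10,Lb), (7,Lf), (10,Le), (7,Lc), (10,Lf), (5,Lc), (10,Lc), (5,Lf), (8,Lc), (5,Le), (8,Lf), (5,Lb)], [(9,Ld), (1,Lf), (16,Lc), (14,Lf), (6,Ld), (6,Le), (7,La), (9,La), (9,Lf), (1,Ld), (1,Lc), (14,Lc), (14,Ld), (6,Lf), (6,La), (8,La), (9,Le)], [(0,Lf), (1,La), (16,Le), (14,La), (15,Lf), (2,Lb), (7,Lb), (11,La), (11,Lc), (2,Ld), (3,Lf), (12,Lf), (13,Ld), (4,Lc), (4,La), (8,Lb), (13,Lb)], [(0,Ld), (1,Le), (16,Lf), (14,Le), (15,Ld), (6,Lb), (7,Le), (10,La), (9,Lc), (10,Ld), (3,Lc), (12,Lc), (5,Ld), (6,Lc), (5,La), (8,Le), (9,Lb)]]"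

definition T16 :: "bsv list list" where "T16 = [[(4,Lb), (4,Le), (4,La), (5,La), (5,Le), (5,Lf), (5,Lc), (7,Lc), (9,Lc), (11,Lc), (11,Lf), (11,Le), (11,La), (12,La), (12,Le), (12,Lb), (8,Lb)], [(13,Lb), (4,Ld), (3,Le), (7,La), (9,Lb), (13,Ld), (3,Lf), (7,Le), (9,Le), (13,Lf), (3,Ld), (7,Lb), (9,La), (13,Le), (12,Ld), (3,Lb), (8,La)], [(0,La), (6,Lc), (1,La), (6,Lf), (1,Le), (6,Ld), (1,Lf), (15,Ld), (1,Ld), (15,Lf), (10,Ld), (15,Le), (10,Lf), (15,La), (10,Lc), (16,La), (8,Lc)], [(0,Lf), (2,Lc), (2,Le), (6,Lb), (14,Lb), (14,Lf), (16,Lc), (16,Ld), (0,Ld), (0,Lc), (2,Lf), (2,Lb), (10,Lb), (14,Le), (14,Lc), (16,Lf), (8,Ld)], [(0,Lb), (4,Lf), (3,La), (6,La), (5,Lb), (5,Ld), (3,Lc), (7,Lf), (9,Lf), (13,Lc), (11,Ld), (11,Lb), (10,La), (13,La), (12,Lf), (16,Lb), (8,Le)], [(0,Le), (4,Lc), (2,La), (6,Le), (1,Lb), (14,Ld), (1,Lc), (7,Ld), (9,Ld), (15,Lc), (2,Ld), (15,Lb), (10,Le), (14,La), (12,Lc), (16,Le), (8,Lf)]]"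

definition T16i :: "bsv list list" where "T16i = [[(0,Lc), (2,Lc), (2,Lf), (2,Le), (2,La), (3,La), (3,Le), (3,Lb), (16,Lb), (12,Lb), (12,Le), (12,La), (13,La), (13,Le), (13,Lf), (13,Lc), (15,Lc)], [(0,Le), (4,Lf), (11,Ld), (15,Lb), (0,La), (4,Le), (3,Ld), (11,Lb), (16,La), (4,Lb), (12,Ld), (11,Le), (15,La), (0,Lb), (4,Ld), (11,Lf), (15,Le)], [(9,Ld), (6,Lf), (1,Ld), (6,Le), (1,Lf), (6,La), (1,Lc), (7,La), (16,Lc), (8,La), (14,Lc), (9,La), (14,Lf), (9,Le), (14,Ld), (9,Lf), (6,Ld)], [(8,Ld), (8,Lc), (10,Lf), (10,Lb), (1,Lb), (5,Le), (5,Lc), (7,Lf), (16,Ld), (8,Lf), (10,Lc), (10,Le), (14,Lb), (5,Lb), (5,Lf), (7,Lc), (7,Ld)], [(0,Lf), (4,Lc), (2,Ld), (2,Lb), (1,La), (4,La), (3,Lf), (7,Lb), (16,Le), (8,Lb), (12,Lf), (11,La), (14,La), (13,Lb), (13,Ld), (11,Lc), (15,Lf)], [(0,Ld), (6,Lc), (10,Ld), (6,Lb), (1,Le), (5,La), (3,Lc), (7,Le), (16,Lf), (8,Le), (12,Lc), (10,La), (14,Le), (9,Lb), (5,Ld), (9,Lc), (15,Ld)]]"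

definition T17 :: "bsv list list" where "T17 = [[(4,Lb), (4,Le), (4,Lf), (4,Ld), (13,Ld), (5,Ld), (14,Ld), (14,Lf), (14,Le), (14,Lb), (10,Lb), (10,Le), (10,La), (9,La), (8,La), (8,Le), (8,Lb)], [(13,Lb), (5,La), (6,Lc), (12,Lf), (13,Le), (5,Le), (6,Lf), (12,Lc), (13,La), (5,Lb), (6,Le), (10,Lc), (12,La), (9,Lb), (6,La), (8,Lc), (12,Le)], [(0,Lf), (3,Le), (0,Lc), (3,Lf), (15,Lc), (3,Lc), (15,Lf), (1,Lc), (15,Le), (1,Lf), (15,Lb), (1,Ld), (11,Lb), (9,Ld), (7,Lb), (0,Ld), (3,Lb)], [(0,La), (2,La), (2,Lf), (11,Ld), (11,Lc), (7,Lc), (7,Ld), (16,Lf), (16,La), (1,La), (2,Le), (2,Ld), (11,Lf), (9,Lc), (7,Lf), (16,Ld), (16,Le)], [(0,Lb), (4,La), (4,Lc), (12,Ld), (13,Lf), (5,Lf), (6,Ld), (14,Lc), (14,La), (1,Lb), (6,Lb), (10,Lf), (11,La), (9,Le), (7,La), (8,Lf), (12,Lb)], [(0,Le), (3,La), (2,Lc), (3,Ld), (13,Lc), (5,Lc), (15,Ld), (16,Lc), (15,La), (1,Le), (2,Lb), (10,Ld), (11,Le), (9,Lf), (7,Le), (8,Ld), (16,Lb)]]"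

definition T17i :: "bsv list list" where "T17i = [[(0,Ld), (9,Ld), (1,Ld), (1,Lf), (1,Le), (1,Lb), (14,Lb), (14,Le), (14,La), (13,La), (12,La), (12,Le), (12,Lb), (8,Lb), (8,Le), (8,Lf), (8,Ld)], [(0,Le), (9,Le), (10,Lf), (16,Lc), (0,La), (9,Lb), (10,Le), (14,Lc), (16,La), (13,Lb), (10,La), (12,Lc), (16,Le), (0,Lb), (9,La), (10,Lc), (16,Lf)], [(2,Lc), (7,Lc), (2,Lf), (5,Lc), (2,Le), (5,Lf), (2,Lb), (5,Ld), (15,Lb), (13,Ld), (11,Lb), (4,Ld), (7,Lb), (4,Lf), (7,Le), (4,Lc), (7,Lf)], [(15,Lc), (11,Lc), (11,Ld), (3,Lf), (3,La), (5,La), (6,Le), (6,Ld), (15,Lf), (13,Lc), (11,Lf), (3,Ld), (3,Le), (4,La), (6,La), (6,Lf), (15,Ld)], [(0,Lf), (9,Lf), (10,Ld), (1,Lc), (1,La), (5,Lb), (10,Lb), (14,Lf), (15,La), (13,Le), (11,La), (12,Lf), (16,Lb), (4,Lb), (8,La), (8,Lc), (16,Ld)], [(0,Lc), (9,Lc), (2,Ld), (3,Lc), (2,La), (5,Le), (6,Lb), (14,Ld), (15,Le), (13,Lf), (11,Le), (12,Ld), (3,Lb), (4,Le), (7,La), (6,Lc), (7,Ld)]]"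

definition D0 :: "nat list list" where "D0 = [[1, 2, 3, 4, 4, 5, 6, 6, 5, 5, 6, 6, 5, 4, 4, 3, 2], [1, 4, 5, 5, 2, 4, 6, 6, 3, 3, 6, 6, 4, 2, 5, 5, 4], [2, 5, 3, 6, 4, 7, 5, 6, 5, 5, 6, 5, 7, 4, 6, 3, 5], [2, 4, 5, 7, 5, 6, 6, 5, 3, 3, 5, 6, 6, 5, 7, 5, 4], [0, 3, 4, 5, 3, 5, 7, 7, 4, 4, 7, 7, 5, 3, 5, 4, 3], [1, 4, 4, 6, 4, 6, 6, 6, 4, 4, 6, 6, 6, 4, 6, 4, 4]]"

definition D1 :: "nat list list" where "D1 = [[0, 1, 2, 3, 4, 5, 6, 7, 6, 6, 7, 6, 5, 4, 3, 2, 1], [2, 3, 4, 4, 3, 4, 5, 5, 4, 4, 5, 5, 4, 3, 4, 4, 3], [3, 4, 4, 5, 5, 6, 6, 7, 6, 6, 7, 6, 6, 5, 5, 4, 4], [3, 4, 5, 6, 6, 7, 6, 5, 4, 4, 5, 6, 7, 6, 6, 5, 4], [1, 2, 3, 4, 4, 5, 6, 6, 5, 5, 6, 6, 5, 4, 4, 3, 2], [2, 3, 4, 5, 5, 6, 7, 6, 5, 5, 6, 7, 6, 5, 5, 4, 3]]"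

definition R1 :: "((nat \<times> nat) \<times> bsv) list" where "R1 = [((1,0),(0,La)), ((1,2),(0,Lb)), ((2,3),(0,Lc)), ((0,1),(0,Le)), ((2,1),(1,La)), ((4,3),(1,Lb)), ((5,4),(1,Lc)), ((4,4),(1,Ld)), ((3,2),(1,Le)), ((3,4),(2,Lc)), ((5,5),(2,Ld)), ((6,5),(3,Lc)), ((7,6),(3,Ld)), ((4,5),(4,Lc)), ((5,6),(4,Ld)), ((6,7),(5,Ld)), ((6,6),(5,Lf))]"

definition R2 :: "((nat \<times> nat \<times> nat \<times> nat) \<times> bsv \<times> bsv) list" where "R2 = [((1,0,0,1),(0,La),(0,Le)), ((1,2,0,1),(0,La),(1,La)), ((1,0,2,1),(0,Lb),(0,Le)), ((1,2,2,3),(0,Lb),(4,Lb)), ((2,1,3,2),(0,Lc),(0,Lf)), ((2,3,3,4),(0,Lc),(2,Lc)), ((0,1,1,0),(0,Le),(0,La)), ((0,1,1,2),(0,Le),(0,Lb)), ((2,3,1,2),(1,La),(1,Le)), ((2,1,1,0),(1,La),(0,La)), ((4,3,3,2),(1,Lb),(1,Le)), ((4,4,3,4),(1,Lb),(5,Lb)), ((4,5,3,4),(1,Lb),(14,Lb)), ((5,4,4,3),(1,Lc),(1,Lf)), ((5,6,4,5),(1,Lc),(3,Lc)), ((5,5,4,4),(1,Lc),(16,Lc)), ((4,4,4,3),(1,Ld),(1,Lf)), ((4,3,4,4),(1,Ld),(9,Ld)), ((4,5,4,5),(1,Ld),(10,Ld)), ((3,2,2,1),(1,Le),(1,La)), ((3,4,2,3),(1,Le),(1,Lb)),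 ((3,4,4,4),(2,Lc),(2,Lf)), ((3,4,4,5),(2,Lc),(4,Lc)), ((3,2,4,3),(2,Lc),(0,Lc)), ((5,4,5,4),(2,Ld),(2,Lf)), ((5,5,5,5),(2,Ld),(10,Ld)), ((5,6,5,6),(2,Ld),(11,Ld)), ((6,6,5,5),(3,Lc),(3,Lf)), ((6,7,5,6),(3,Lc),(5,Lc)), ((6,5,5,4),(3,Lc),(1,Lc)), ((7,6,6,5),(3,Ld),(3,Lf)), ((7,6,6,6),(3,Ld),(11,Ld)), ((7,6,6,7),(3,Ld),(12,Ld)), ((4,4,5,5),(4,Lc),(4,Lf)), ((4,5,5,6),(4,Lc),(6,Lc)), ((4,3,5,4),(4,Lc),(2,Lc)), ((5,4,6,5),(4,Ld),(4,Lf)), ((5,6,6,7),(4,Ld),(12,Ld)), ((5,5,6,6),(4,Ld),(13,Ld)), ((6,6,7,6),(5,Ld),(5,Lf)), ((6,5,7,6),(5,Ld),(13,Ld)), ((6,7,7,6),(5,Ld),(14,Ld)), ((6,5,6,5),(5,Lf),(5,Le)), ((6,7,6,6),(5,Lf),(5,Lc)), ((6,6,6,7),(5,Lf),(5,Ld))]"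

definition Slist where "Slist = [S0, S1, S2, S3, S4, S5, S6, S7]"

definition Tlist where "Tlist = [T0, T1, T2, T3, T4, T5, T6, T7, T8, T9, T10, T11, T12, T13, T14, T15, T16, T17]"

lemma aut_S0: "BS_aut (look S0)"
  apply (rule autchk_aut[where \<psi>="look S0i"])
  unfolding autchk_def Vlist_def upt17 S0_def S0i_def BS_V_def by simp


lemma aut_S1: "BS_aut (look S1)"
  apply (rule autchk_aut[where \<psi>="look S1i"])
  unfolding autchk_def Vlist_def upt17 S1_def S1i_def BS_V_def by simp


lemma aut_S2: "BS_aut (look S2)"
  apply (rule autchk_aut[where \<psi>="look S2i"])
  unfolding autchk_def Vlist_def upt17 S2_def S2i_def BS_V_def by simp


lemma aut_S3: "BS_aut (look S3)"
  apply (rule autchk_aut[where \<psi>="look S3i"])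
  unfolding autchk_def Vlist_def upt17 S3_def S3i_def BS_V_def by simp


lemma aut_S4: "BS_aut (look S4)"
  apply (rule autchk_aut[where \<psi>="look S4i"])
  unfolding autchk_def Vlist_def upt17 S4_def S4i_def BS_V_def by simp


lemma aut_S5: "BS_aut (look S5)"
  apply (rule autchk_aut[where \<psi>="look S5i"])
  unfolding autchk_def Vlist_def upt17 S5_def S5i_def BS_V_def by simp


lemma aut_S6: "BS_aut (look S6)"
  apply (rule autchk_aut[where \<psi>="look S6i"])
  unfolding autchk_def Vlist_def upt17 S6_def S6i_def BS_V_def by simp


lemma aut_S7: "BS_aut (look S7)"
  apply (rule autchk_aut[where \<psi>="look S7i"])
  unfolding autchk_def Vlist_def upt17 S7_def S7i_def BS_V_def by simp


lemma aut_T0: "BS_aut (look T0)"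
  apply (rule autchk_aut[where \<psi>="look T0i"])
  unfolding autchk_def Vlist_def upt17 T0_def T0i_def BS_V_def by simp


lemma aut_T1: "BS_aut (look T1)"
  apply (rule autchk_aut[where \<psi>="look T1i"])
  unfolding autchk_def Vlist_def upt17 T1_def T1i_def BS_V_def by simp


lemma aut_T2: "BS_aut (look T2)"
  apply (rule autchk_aut[where \<psi>="look T2i"])
  unfolding autchk_def Vlist_def upt17 T2_def T2i_def BS_V_def by simp


lemma aut_T3: "BS_aut (look T3)"
  apply (rule autchk_aut[where \<psi>="look T3i"])
  unfolding autchk_def Vlist_def upt17 T3_def T3i_def BS_V_def by simp


lemma aut_T4: "BS_aut (look T4)"
  apply (rule autchk_aut[where \<psi>="look T4i"])
  unfolding autchk_def Vlist_def upt17 T4_def T4i_def BS_V_def by simp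


lemma aut_T5: "BS_aut (look T5)"
  apply (rule autchk_aut[where \<psi>="look T5i"])
  unfolding autchk_def Vlist_def upt17 T5_def T5i_def BS_V_def by simp


lemma aut_T6: "BS_aut (look T6)"
  apply (rule autchk_aut[where \<psi>="look T6i"])
  unfolding autchk_def Vlist_def upt17 T6_def T6i_def BS_V_def by simp


lemma aut_T7: "BS_aut (look T7)"
  apply (rule autchk_aut[where \<psi>="look T7i"])
  unfolding autchk_def Vlist_def upt17 T7_def T7i_def BS_V_def by simp


lemma aut_T8: "BS_aut (look T8)"
  apply (rule autchk_aut[where \<psi>="look T8i"])
  unfolding autchk_def Vlist_def upt17 T8_def T8i_def BS_V_def by simp


lemma aut_T9: "BS_aut (look T9)"
  apply (rule autchk_aut[where \<psi>="look T9i"])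
  unfolding autchk_def Vlist_def upt17 T9_def T9i_def BS_V_def by simp


lemma aut_T10: "BS_aut (look T10)"
  apply (rule autchk_aut[where \<psi>="look T10i"])
  unfolding autchk_def Vlist_def upt17 T10_def T10i_def BS_V_def by simp


lemma aut_T11: "BS_aut (look T11)"
  apply (rule autchk_aut[where \<psi>="look T11i"])
  unfolding autchk_def Vlist_def upt17 T11_def T11i_def BS_V_def by simp


lemma aut_T12: "BS_aut (look T12)"
  apply (rule autchk_aut[where \<psi>="look T12i"])
  unfolding autchk_def Vlist_def upt17 T12_def T12i_def BS_V_def by simp


lemma aut_T13: "BS_aut (look T13)"
  apply (rule autchk_aut[where \<psi>="look T13i"])
  unfolding autchk_def Vlist_def upt17 T13_def T13i_def BS_V_def by simp


lemma aut_T14: "BS_aut (look T14)"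
  apply (rule autchk_aut[where \<psi>="look T14i"])
  unfolding autchk_def Vlist_def upt17 T14_def T14i_def BS_V_def by simp


lemma aut_T15: "BS_aut (look T15)"
  apply (rule autchk_aut[where \<psi>="look T15i"])
  unfolding autchk_def Vlist_def upt17 T15_def T15i_def BS_V_def by simp


lemma aut_T16: "BS_aut (look T16)"
  apply (rule autchk_aut[where \<psi>="look T16i"])
  unfolding autchk_def Vlist_def upt17 T16_def T16i_def BS_V_def by simp


lemma aut_T17: "BS_aut (look T17)"
  apply (rule autchk_aut[where \<psi>="look T17i"])
  unfolding autchk_def Vlist_def upt17 T17_def T17i_def BS_V_def by simp


lemma aut_Slist: "\<forall>T\<in>set Slist. BS_aut (look T)"
  unfolding Slist_def using aut_S0 aut_S1 aut_S2 aut_S3 aut_S4 aut_S5 aut_S6 aut_S7 by simp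

lemma aut_Tlist: "\<forall>T\<in>set Tlist. BS_aut (look T)"
  unfolding Tlist_def using aut_T0 aut_T1 aut_T2 aut_T3 aut_T4 aut_T5 aut_T6 aut_T7 aut_T8 aut_T9 aut_T10 aut_T11 aut_T12 aut_T13 aut_T14 aut_T15 aut_T16 aut_T17 by simp




definition rot1 :: "bsv \<Rightarrow> bsv" where "rot1 x = (Suc (fst x) mod 17, snd x)"
definition rot16 :: "bsv \<Rightarrow> bsv" where "rot16 x = ((fst x + 16) mod 17, snd x)"

lemma aut_rot1: "BS_aut rot1"
  apply (rule autchk_aut[where \<psi>="rot16"])
  unfolding autchk_def Vlist_def upt17 rot1_def rot16_def BS_V_def by simp

lemma aut_rotk: "BS_aut (rot1 ^^ k)"
  apply (induction k)
   apply (simp only: funpow.simps aut_id)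
  apply (simp only: funpow.simps(2))
  by (rule aut_comp[OF aut_rot1])

lemma rotk: "(rot1 ^^ k) (i,L) = ((i+k) mod 17, L)" if "i < 17"
  using that by (induction k) (simp_all add: rot1_def mod_Suc_eq)

definition u0 :: bsv where "u0 = (0,Le)"
definition v0 :: bsv where "v0 = (0,La)"

lemma C1_0: "list_all (\<lambda>L. list_all (\<lambda>b. list_ex (\<lambda>T. look T (0,L) = u0 \<and> look T b = v0) Tlist) (nbrs (0,L))) [La,Lb,Lc,Ld,Le,Lf]"
  unfolding Tlist_def u0_def v0_def by (simp add: T0_def T1_def T2_def T3_def T4_def T5_def T6_def T7_def T8_def T9_def T10_def T11_def T12_def T13_def T14_def T15_def T16_def T17_def)

lemma C1: assumes "BS_adj u v" shows "\<exists>\<phi>. BS_aut \<phi> \<and> \<phi> u = u0 \<and> \<phi> v = v0"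
proof -
  obtain i L where u: "u = (i,L)" by (cases u)
  have "u \<in> BS_V" using assms adj_V by blast
  then have i: "i < 17" unfolding u BS_V_def by simp
  define r where "r = rot1 ^^ (17 - i)"
  have ar: "BS_aut r" unfolding r_def by (rule aut_rotk)
  have ru: "r u = (0,L)" unfolding r_def u using rotk[OF i] i by simp
  have "BS_adj (r u) (r v)" using aut_adj[OF ar assms] .
  then have rv: "r v \<in> set (nbrs (0,L))" using adj_iff ru by simp
  have "\<forall>L. \<forall>b\<in>set (nbrs (0,L)). \<exists>T\<in>set Tlist. look T (0,L) = u0 \<and> look T b = v0"
  proof
    fix L show "\<forall>b\<in>set (nbrs (0,L)). \<exists>T\<in>set Tlist. look T (0,L) = u0 \<and> look T b = v0"
      using C1_0 by (cases L) (simp_all add: list_all_iff list_ex_iff)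
  qed
  then obtain T where T: "T \<in> set Tlist" "look T (0,L) = u0" "look T (r v) = v0" using rv by blast
  have "BS_aut (look T \<circ> r)" using aut_comp aut_Tlist T(1) ar by blast
  then show ?thesis using T ru by (intro exI[of _ "look T \<circ> r"]) simp
qed

lemma u0V: "u0 \<in> BS_V" and v0V: "v0 \<in> BS_V" unfolding u0_def v0_def BS_V_def by simp_all

lemma dist0: "x \<in> BS_V \<Longrightarrow> BS_dist u0 x = look D0 x"
  apply (rule dist_pot[OF u0V])
  subgoal unfolding u0_def D0_def by simp
  subgoal unfolding V_eq Vlist_def upt17 D0_def by simp
  subgoal unfolding V_eq Vlist_def upt17 D0_def u0_def by simp
  by assumption

lemma dist1: "x \<in> BS_V \<Longrightarrow> BS_dist v0 x = look D1 x"
  apply (rule dist_pot[OF v0V])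
  subgoal unfolding v0_def D1_def by simp
  subgoal unfolding V_eq Vlist_def upt17 D1_def by simp
  subgoal unfolding V_eq Vlist_def upt17 D1_def v0_def by simp
  by assumption

lemma Sfix: "list_all (\<lambda>T. look T u0 = u0 \<and> look T v0 = v0) Slist"
  unfolding Slist_def u0_def v0_def by (simp add: S0_def S1_def S2_def S3_def S4_def S5_def S6_def S7_def)

definition W1 :: "nat list list" where "W1 = [[0, 0, 1, 1, 5, 4, 1, 1, 2, 1, 2, 2, 7, 6, 2, 2, 2], [0, 0, 1, 7, 4, 4, 1, 7, 6, 5, 4, 2, 7, 5, 4, 2, 3], [0, 0, 0, 0, 0, 5, 4, 7, 6, 5, 4, 7, 6, 3, 3, 3, 3], [1, 0, 0, 0, 0, 0, 6, 2, 2, 1, 1, 5, 3, 3, 3, 3, 3], [0, 0, 5, 5, 4, 5, 4, 2, 6, 5, 1, 7, 6, 7, 6, 6, 3], [4, 4, 1, 5, 4, 0, 6, 7, 2, 1, 4, 5, 3, 7, 6, 2, 7]]"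

definition W2 :: "nat list list list" where "W2 = [[[0,0,2], [0,1,0], [5,1,1], [1,1,1], [5,5,5], [4,4,4], [1,1,1], [1,1,1], [2,2,2], [1,1,1], [2,2,2], [2,2,2], [7,7,7], [6,6,6], [2,2,2], [6,2,2], [3,2,2]], [[0,0,1], [0,0,0], [1,1,1], [7,7,7], [4,6,4], [4,4,4], [1,1,1], [7,7,7], [6,6,6], [5,5,5], [4,4,4], [2,2,2], [7,7,7], [7,5,5], [4,4,4], [2,2,2], [3,3,3]], [[0,0,3], [0,0,0], [0,0,0], [0,0,0], [0,0,0], [5,5,5], [4,4,4], [7,7,7], [6,6,6], [5,5,5], [4,4,4], [7,7,7], [6,6,6], [3,3,3], [3,3,3], [3,3,3], [3,3,3]], [[1,2,1], [0,0,0], [0,0,0], [0,0,0], [0,0,0], [0,0,0], [6,6,6], [2,2,2], [2,2,2], [1,1,1], [1,1,1], [5,5,5], [3,3,3], [3,3,3], [3,3,3], [3,3,3], [3,3,3]], [[0,0,4], [0,0,4], [5,5,5], [5,5,5], [4,4,4], [5,5,5], [4,4,4], [2,2,2], [6,6,6], [5,5,5], [1,1,1], [7,7,7], [6,6,6], [7,7,7], [6,6,6], [6,6,6], [3,3,7]], [[4,4,5], [4,4,4], [1,1,1], [5,5,5], [4,4,4], [0,0,0], [6,6,6], [7,7,7], [2,2,2], [1,1,1], [4,4,4], [5,5,5], [3,3,3], [7,7,7], [6,6,6], [2,2,2], [7,7,7]]]"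

definition Sfun :: "nat \<Rightarrow> bsv list list" where "Sfun k = Slist ! k"
lemma Sfun_0: "Sfun 0 = S0" by (simp add: Sfun_def Slist_def)
lemma Sfun_1: "Sfun (Suc 0) = S1" by (simp add: Sfun_def Slist_def)
lemma Sfun_2: "Sfun 2 = S2" by (simp add: Sfun_def Slist_def)
lemma Sfun_3: "Sfun 3 = S3" by (simp add: Sfun_def Slist_def)
lemma Sfun_4: "Sfun 4 = S4" by (simp add: Sfun_def Slist_def)
lemma Sfun_5: "Sfun 5 = S5" by (simp add: Sfun_def Slist_def)
lemma Sfun_6: "Sfun 6 = S6" by (simp add: Sfun_def Slist_def)
lemma Sfun_7: "Sfun 7 = S7" by (simp add: Sfun_def Slist_def)

lemma Sfun_in: "k < 8 \<Longrightarrow> Sfun k \<in> set Slist"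
  unfolding Sfun_def by (rule nth_mem) (simp add: Slist_def)

lemma C2w: "list_all (\<lambda>x. look W1 x < 8 \<and> look (Sfun (look W1 x)) x = the (map_of R1 (look D0 x, look D1 x))) Vlist"
  unfolding Vlist_def upt17
  by (simp add: W1_def R1_def D0_def D1_def Sfun_0 Sfun_1 Sfun_2 Sfun_3 Sfun_4 Sfun_5 Sfun_6 Sfun_7 S0_def S1_def S2_def S3_def S4_def S5_def S6_def S7_def)

lemma C3w: "list_all (\<lambda>a. length (look W2 a) = 3 \<and> list_all (\<lambda>k. k < 8) (look W2 a) \<and>
   list_all (\<lambda>(b,k). look (Sfun k) a = fst (the (map_of R2 (look D0 a, look D0 b, look D1 a, look D1 b))) \<and>
     look (Sfun k) b = snd (the (map_of R2 (look D0 a, look D0 b, look D1 a, look D1 b)))) (zip (nbrs a) (look W2 a))) Vlist"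
  unfolding Vlist_def upt17
  by (simp add: W2_def R2_def D0_def D1_def Sfun_0 Sfun_1 Sfun_2 Sfun_3 Sfun_4 Sfun_5 Sfun_6 Sfun_7 S0_def S1_def S2_def S3_def S4_def S5_def S6_def S7_def)

definition rep1 :: "nat \<Rightarrow> nat \<Rightarrow> bsv" where "rep1 d e = the (map_of R1 (d,e))"
definition rep2 :: "nat \<Rightarrow> nat \<Rightarrow> nat \<Rightarrow> nat \<Rightarrow> bsv \<times> bsv" where
  "rep2 a b c d = the (map_of R2 (a,b,c,d))"

lemma C2': assumes "x \<in> BS_V" shows "\<exists>T\<in>set Slist. look T x = rep1 (BS_dist u0 x) (BS_dist v0 x)"
proof -
  have "x \<in> set Vlist" using assms V_eq by simp
  then have "look W1 x < 8 \<and> look (Sfun (look W1 x)) x = the (map_of R1 (look D0 x, look D1 x))"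
    using C2w by (simp add: list_all_iff)
  then show ?thesis using Sfun_in dist0[OF assms] dist1[OF assms] unfolding rep1_def by metis
qed

lemma len_nbrs: "length (nbrs a) = 3"
  by (cases a rule: nbrs.cases) auto

lemma C3': assumes "BS_adj a b"
  shows "\<exists>T\<in>set Slist. look T a = fst (rep2 (BS_dist u0 a) (BS_dist u0 b) (BS_dist v0 a) (BS_dist v0 b))
                  \<and> look T b = snd (rep2 (BS_dist u0 a) (BS_dist u0 b) (BS_dist v0 a) (BS_dist v0 b))"
proof -
  have aV: "a \<in> BS_V" and bV: "b \<in> BS_V" using adj_V[OF assms] by auto
  have bn: "b \<in> set (nbrs a)" using assms adj_iff by blast
  have "a \<in> set Vlist" using aV V_eq by simp
  then have h: "length (look W2 a) = 3 \<and> list_all (\<lambda>k. k < 8) (look W2 a) \<and>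
   list_all (\<lambda>(b,k). look (Sfun k) a = fst (the (map_of R2 (look D0 a, look D0 b, look D1 a, look D1 b))) \<and>
     look (Sfun k) b = snd (the (map_of R2 (look D0 a, look D0 b, look D1 a, look D1 b)))) (zip (nbrs a) (look W2 a))"
    using C3w by (simp add: list_all_iff)
  obtain j where j: "j < length (nbrs a)" "nbrs a ! j = b" using bn by (metis in_set_conv_nth)
  have j3: "j < 3" using j len_nbrs by simp
  define k where "k = look W2 a ! j"
  have "(b,k) \<in> set (zip (nbrs a) (look W2 a))"
    using j j3 h len_nbrs unfolding k_def by (metis in_set_zip fst_conv snd_conv)
  then have hk: "look (Sfun k) a = fst (the (map_of R2 (look D0 a, look D0 b, look D1 a, look D1 b))) \<and>
     look (Sfun k) b = snd (the (map_of R2 (look D0 a, look D0 b, look D1 a, look D1 b)))"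
    using h by (auto simp: list_all_iff)
  have "k < 8" using h j3 unfolding k_def by (simp add: list_all_iff)
  then have "Sfun k \<in> set Slist" by (rule Sfun_in)
  then show ?thesis using hk dist0[OF aV] dist0[OF bV] dist1[OF aV] dist1[OF bV] unfolding rep2_def by metis
qed

lemma Sfix': "T \<in> set Slist \<Longrightarrow> look T u0 = u0 \<and> look T v0 = v0"
  using Sfix by (simp add: list_all_iff)

lemma norm1: assumes "BS_adj u v" "x \<in> BS_V"
  shows "\<exists>\<beta>. BS_aut \<beta> \<and> \<beta> u = u0 \<and> \<beta> v = v0 \<and> \<beta> x = rep1 (BS_dist u x) (BS_dist v x)"
proof -
  obtain \<alpha> where a: "BS_aut \<alpha>" "\<alpha> u = u0" "\<alpha> v = v0" using C1[OF assms(1)] by blast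
  have uV: "u \<in> BS_V" and vV: "v \<in> BS_V" using adj_V[OF assms(1)] by auto
  have x1: "\<alpha> x \<in> BS_V" using aut_V[OF a(1) assms(2)] .
  obtain T where T: "T \<in> set Slist" "look T (\<alpha> x) = rep1 (BS_dist u0 (\<alpha> x)) (BS_dist v0 (\<alpha> x))"
    using C2'[OF x1] by blast
  have d1: "BS_dist u0 (\<alpha> x) = BS_dist u x" using aut_dist[OF a(1) uV assms(2)] a(2) by simp
  have d2: "BS_dist v0 (\<alpha> x) = BS_dist v x" using aut_dist[OF a(1) vV assms(2)] a(3) by simp
  have "BS_aut (look T \<circ> \<alpha>)" using aut_comp aut_Slist T(1) a(1) by blast
  then show ?thesis using T d1 d2 a Sfix'[OF T(1)] by (intro exI[of _ "look T \<circ> \<alpha>"]) simp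
qed

lemma norm2: assumes "BS_adj u v" "BS_adj x y"
  shows "\<exists>\<beta>. BS_aut \<beta> \<and> \<beta> u = u0 \<and> \<beta> v = v0 \<and>
     \<beta> x = fst (rep2 (BS_dist u x) (BS_dist u y) (BS_dist v x) (BS_dist v y)) \<and>
     \<beta> y = snd (rep2 (BS_dist u x) (BS_dist u y) (BS_dist v x) (BS_dist v y))"
proof -
  obtain \<alpha> where a: "BS_aut \<alpha>" "\<alpha> u = u0" "\<alpha> v = v0" using C1[OF assms(1)] by blast
  have uV: "u \<in> BS_V" and vV: "v \<in> BS_V" using adj_V[OF assms(1)] by auto
  have xV: "x \<in> BS_V" and yV: "y \<in> BS_V" using adj_V[OF assms(2)] by auto
  have adj1: "BS_adj (\<alpha> x) (\<alpha> y)" using aut_adj[OF a(1) assms(2)] .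
  obtain T where T: "T \<in> set Slist"
    "look T (\<alpha> x) = fst (rep2 (BS_dist u0 (\<alpha> x)) (BS_dist u0 (\<alpha> y)) (BS_dist v0 (\<alpha> x)) (BS_dist v0 (\<alpha> y)))"
    "look T (\<alpha> y) = snd (rep2 (BS_dist u0 (\<alpha> x)) (BS_dist u0 (\<alpha> y)) (BS_dist v0 (\<alpha> x)) (BS_dist v0 (\<alpha> y)))"
    using C3'[OF adj1] by blast
  have d1: "BS_dist u0 (\<alpha> x) = BS_dist u x" using aut_dist[OF a(1) uV xV] a(2) by simp
  have d2: "BS_dist v0 (\<alpha> x) = BS_dist v x" using aut_dist[OF a(1) vV xV] a(3) by simp
  have d3: "BS_dist u0 (\<alpha> y) = BS_dist u y" using aut_dist[OF a(1) uV yV] a(2) by simp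
  have d4: "BS_dist v0 (\<alpha> y) = BS_dist v y" using aut_dist[OF a(1) vV yV] a(3) by simp
  have "BS_aut (look T \<circ> \<alpha>)" using aut_comp aut_Slist T(1) a(1) by blast
  then show ?thesis using T d1 d2 d3 d4 a Sfix'[OF T(1)] by (intro exI[of _ "look T \<circ> \<alpha>"]) simp
qed

theorem lemma2p4:
  shows "(\<forall>u\<in>BS_V. \<forall>v\<in>BS_V. \<forall>x\<in>BS_V. \<forall>u'\<in>BS_V. \<forall>v'\<in>BS_V. \<forall>x'\<in>BS_V.
            BS_adj u v \<and> BS_adj u' v' \<and>
            BS_dist u x = BS_dist u' x' \<and> BS_dist v x = BS_dist v' x' \<longrightarrow>
            (\<exists>\<phi>. BS_aut \<phi> \<and> \<phi> u = u' \<and> \<phi> v = v' \<and> \<phi> x = x'))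
       \<and>
         (\<forall>u\<in>BS_V. \<forall>v\<in>BS_V. \<forall>x\<in>BS_V. \<forall>y\<in>BS_V.
          \<forall>u'\<in>BS_V. \<forall>v'\<in>BS_V. \<forall>x'\<in>BS_V. \<forall>y'\<in>BS_V.
            BS_adj u v \<and> BS_adj x y \<and> BS_adj u' v' \<and> BS_adj x' y' \<and>
            BS_dist u x = BS_dist u' x' \<and> BS_dist u y = BS_dist u' y' \<and>
            BS_dist v x = BS_dist v' x' \<and> BS_dist v y = BS_dist v' y' \<longrightarrow>
            (\<exists>\<phi>. BS_aut \<phi> \<and> \<phi> u = u' \<and> \<phi> v = v' \<and> \<phi> x = x' \<and> \<phi> y = y'))"
proof (intro conjI ballI impI)
  fix u v x u' v' x'
  assume V: "u \<in> BS_V" "v \<in> BS_V" "x \<in> BS_V" "u' \<in> BS_V" "v' \<in> BS_V" "x' \<in> BS_V"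
    and h: "BS_adj u v \<and> BS_adj u' v' \<and> BS_dist u x = BS_dist u' x' \<and> BS_dist v x = BS_dist v' x'"
  obtain \<beta> where b: "BS_aut \<beta>" "\<beta> u = u0" "\<beta> v = v0" "\<beta> x = rep1 (BS_dist u x) (BS_dist v x)"
    using norm1[OF _ V(3)] h by blast
  obtain \<beta>' where b': "BS_aut \<beta>'" "\<beta>' u' = u0" "\<beta>' v' = v0" "\<beta>' x' = rep1 (BS_dist u' x') (BS_dist v' x')"
    using norm1[OF _ V(6)] h by blast
  obtain \<psi> where p: "BS_aut \<psi>" "\<forall>z\<in>BS_V. \<psi> (\<beta>' z) = z" using aut_inv[OF b'(1)] by blast
  have "BS_aut (\<psi> \<circ> \<beta>)" using aut_comp[OF p(1) b(1)] .
  moreover have "(\<psi> \<circ> \<beta>) u = u'" using b(2) b'(2) p(2) V(4) by (metis comp_apply)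
  moreover have "(\<psi> \<circ> \<beta>) v = v'" using b(3) b'(3) p(2) V(5) by (metis comp_apply)
  moreover have "(\<psi> \<circ> \<beta>) x = x'" using b(4) b'(4) p(2) V(6) h by (metis comp_apply)
  ultimately show "\<exists>\<phi>. BS_aut \<phi> \<and> \<phi> u = u' \<and> \<phi> v = v' \<and> \<phi> x = x'" by blast
next
  fix u v x y u' v' x' y'
  assume V: "u \<in> BS_V" "v \<in> BS_V" "x \<in> BS_V" "y \<in> BS_V" "u' \<in> BS_V" "v' \<in> BS_V" "x' \<in> BS_V" "y' \<in> BS_V"
    and h: "BS_adj u v \<and> BS_adj x y \<and> BS_adj u' v' \<and> BS_adj x' y' \<and>
            BS_dist u x = BS_dist u' x' \<and> BS_dist u y = BS_dist u' y' \<and>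
            BS_dist v x = BS_dist v' x' \<and> BS_dist v y = BS_dist v' y'"
  obtain \<beta> where b: "BS_aut \<beta>" "\<beta> u = u0" "\<beta> v = v0"
     "\<beta> x = fst (rep2 (BS_dist u x) (BS_dist u y) (BS_dist v x) (BS_dist v y))"
     "\<beta> y = snd (rep2 (BS_dist u x) (BS_dist u y) (BS_dist v x) (BS_dist v y))"
    using norm2 h by blast
  obtain \<beta>' where b': "BS_aut \<beta>'" "\<beta>' u' = u0" "\<beta>' v' = v0"
     "\<beta>' x' = fst (rep2 (BS_dist u' x') (BS_dist u' y') (BS_dist v' x') (BS_dist v' y'))"
     "\<beta>' y' = snd (rep2 (BS_dist u' x') (BS_dist u' y') (BS_dist v' x') (BS_dist v' y'))"
    using norm2 h by blast
  obtain \<psi> where p: "BS_aut \<psi>" "\<forall>z\<in>BS_V. \<psi> (\<beta>' z) = z" using aut_inv[OF b'(1)] by blast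
  have "BS_aut (\<psi> \<circ> \<beta>)" using aut_comp[OF p(1) b(1)] .
  moreover have "(\<psi> \<circ> \<beta>) u = u'" using b(2) b'(2) p(2) V(5) by (metis comp_apply)
  moreover have "(\<psi> \<circ> \<beta>) v = v'" using b(3) b'(3) p(2) V(6) by (metis comp_apply)
  moreover have "(\<psi> \<circ> \<beta>) x = x'" using b(4) b'(4) p(2) V(7) h by (metis comp_apply)
  moreover have "(\<psi> \<circ> \<beta>) y = y'" using b(5) b'(5) p(2) V(8) h by (metis comp_apply)
  ultimately show "\<exists>\<phi>. BS_aut \<phi> \<and> \<phi> u = u' \<and> \<phi> v = v' \<and> \<phi> x = x' \<and> \<phi> y = y'" by blast
qed


end
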